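(* Consider a market with $M$ consumers $\mathcal{M}=\{1,\dots,M\}$ and $N$ suppliers $\mathcal{N}=\{1,\dots,N\}$, constants $d_0>0$, $\kappa_0>0$ with $Md_0<N\kappa_0$. Assume: for each $i\in\mathcal{M}$, $U_i$ is concave, strictly increasing and continuously differentiable on $[d_0,\infty)$ with $U_i(d_0)=0$; for each $i\in\mathcal{N}$, $C_i:\mathbb{R}\to\mathbb{R}$ is convex, strictly increasing and continuously differentiable with $C_i(s)\ge0$ for $s\ge0$ and $C_i(s)=0$ for $s\le0$. Assume further that no supplier is pivotal: $\frac{(N-1)\kappa_0}{Md_0}>1$. Define the game $\mathcal{G}$ whose players are $\mathcal{M}\cup\mathcal{N}$; consumer $i$ chooses $\theta_d^i\ge0$ and supplier $i$ chooses $\theta_s^i\ge 0$. For a profile with $\sum_i\theta_d^i+\sum_i\theta_s^i>0$, the price is $p(\boldsymbol{\theta}_d,\boldsymbol{\theta}_s)=\frac{\sum_i\theta_d^i+\sum_i\theta_s^i}{N\kappa_0-Md_0}$ and the payoffs are $$\pi_d^i=U_i\!\left(d_0+\frac{\theta_d^i}{p}\right)-p\,d_0-\theta_d^i\ (i\in\mathcal{M}),\qquad \pi_s^i=p\,\kappa_0-\theta_s^i-C_i\!\left(\kappa_0-\frac{\theta_s^i}{p}\right)\ (i\in\mathcal{N}),$$ with $p=p(\boldsymbol{\theta}_d,\boldsymbol{\theta}_s)$; if all parameters are zero, by convention each consumer is allocated $d_0$, each supplier $\kappa_0$, and the price is $0$. Then $\mathcal{G}$ has a unique Nash equilibrium $(\tilde{\boldsymbol{\theta}}_d,\tilde{\boldsymbol{\theta}}_s)$.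 Moreover, writing $\tilde p=p(\tilde{\boldsymbol{\theta}}_d,\tilde{\boldsymbol{\theta}}_s)$, the allocation $\tilde d_i=d_0+\tilde\theta_d^i/\tilde p$ ($i\in\mathcal{M}$), $\tilde s_i=\kappa_0-\tilde\theta_s^i/\tilde p$ ($i\in\mathcal{N}$) is the unique solution of the convex program $$\max_{\mathbf{d},\mathbf{s}}\ \sum_{i=1}^M\tilde U_i(d_i)-\sum_{i=1}^N\tilde C_i(s_i)\quad\text{s.t.}\quad \sum_{i=1}^M d_i=\sum_{i=1}^N s_i,\ \ 0\le s_i\le\kappa_0\ (i\in\mathcal{N}),\ \ d_i\ge d_0\ (i\in\mathcal{M}),$$ where $$\tilde U_i(d_i)=\left(1-\frac{d_i}{N\kappa_0-(M-1)d_0}\right)U_i(d_i)+\frac{1}{N\kappa_0-(M-1)d_0}\int_{d_0}^{d_i}U_i(z)\,dz,$$ $$\tilde C_i(s_i)=\left(1+\frac{s_i}{(N-1)\kappa_0-Md_0}\right)C_i(s_i)-\frac{1}{(N-1)\kappa_0-Md_0}\int_0^{s_i}C_i(z)\,dz.$$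
   Context: A Nash equilibrium is a profile $(\tilde{\boldsymbol{\theta}}_d,\tilde{\boldsymbol{\theta}}_s)$ of nonnegative parameters such that no consumer and no supplier can strictly increase its own payoff by unilaterally changing its own parameter to another nonnegative value. *)

theory Defs
  imports "HOL-Analysis.Analysis"
begin

text \<open>Consumers are indexed by {1..M}, suppliers by {1..N}. Bids are functions
  nat => real; only their values on the index sets matter.\<close>

definition total_bid :: "nat \<Rightarrow> nat \<Rightarrow> (nat \<Rightarrow> real) \<Rightarrow> (nat \<Rightarrow> real) \<Rightarrow> real" where
  "total_bid M N thd ths = (\<Sum>i\<in>{1..M}. thd i) + (\<Sum>i\<in>{1..N}. ths i)"

definition price :: "nat \<Rightarrow> nat \<Rightarrow> real \<Rightarrow> real \<Rightarrow> (nat \<Rightarrow> real) \<Rightarrow> (nat \<Rightarrow> real) \<Rightarrow> real" where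
  "price M N d0 k0 thd ths =
     (if total_bid M N thd ths = 0 then 0
      else total_bid M N thd ths / (real N * k0 - real M * d0))"

definition demand_alloc :: "nat \<Rightarrow> nat \<Rightarrow> real \<Rightarrow> real \<Rightarrow> (nat \<Rightarrow> real) \<Rightarrow> (nat \<Rightarrow> real) \<Rightarrow> nat \<Rightarrow> real" where
  "demand_alloc M N d0 k0 thd ths i =
     (if total_bid M N thd ths = 0 then d0
      else d0 + thd i / price M N d0 k0 thd ths)"

definition supply_alloc :: "nat \<Rightarrow> nat \<Rightarrow> real \<Rightarrow> real \<Rightarrow> (nat \<Rightarrow> real) \<Rightarrow> (nat \<Rightarrow> real) \<Rightarrow> nat \<Rightarrow> real" where
  "supply_alloc M N d0 k0 thd ths i =
     (if total_bid M N thd ths = 0 then k0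
      else k0 - ths i / price M N d0 k0 thd ths)"

definition payoff_d :: "nat \<Rightarrow> nat \<Rightarrow> real \<Rightarrow> real \<Rightarrow> (nat \<Rightarrow> real \<Rightarrow> real)
    \<Rightarrow> (nat \<Rightarrow> real) \<Rightarrow> (nat \<Rightarrow> real) \<Rightarrow> nat \<Rightarrow> real" where
  "payoff_d M N d0 k0 U thd ths i =
     U i (demand_alloc M N d0 k0 thd ths i) - price M N d0 k0 thd ths * d0 - thd i"

definition payoff_s :: "nat \<Rightarrow> nat \<Rightarrow> real \<Rightarrow> real \<Rightarrow> (nat \<Rightarrow> real \<Rightarrow> real)
    \<Rightarrow> (nat \<Rightarrow> real) \<Rightarrow> (nat \<Rightarrow> real) \<Rightarrow> nat \<Rightarrow> real" where
  "payoff_s M N d0 k0 C thd ths i =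
     price M N d0 k0 thd ths * k0 - ths i - C i (supply_alloc M N d0 k0 thd ths i)"

definition is_nash :: "nat \<Rightarrow> nat \<Rightarrow> real \<Rightarrow> real \<Rightarrow> (nat \<Rightarrow> real \<Rightarrow> real) \<Rightarrow> (nat \<Rightarrow> real \<Rightarrow> real)
    \<Rightarrow> (nat \<Rightarrow> real) \<Rightarrow> (nat \<Rightarrow> real) \<Rightarrow> bool" where
  "is_nash M N d0 k0 U C thd ths \<longleftrightarrow>
     (\<forall>i\<in>{1..M}. thd i \<ge> 0) \<and> (\<forall>i\<in>{1..N}. ths i \<ge> 0) \<and>
     (\<forall>i\<in>{1..M}. \<forall>t\<ge>0. payoff_d M N d0 k0 U (thd(i := t)) ths i \<le> payoff_d M N d0 k0 U thd ths i) \<and>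
     (\<forall>i\<in>{1..N}. \<forall>t\<ge>0. payoff_s M N d0 k0 C thd (ths(i := t)) i \<le> payoff_s M N d0 k0 C thd ths i)"

definition U_tilde :: "nat \<Rightarrow> nat \<Rightarrow> real \<Rightarrow> real \<Rightarrow> (real \<Rightarrow> real) \<Rightarrow> real \<Rightarrow> real" where
  "U_tilde M N d0 k0 u x =
     (1 - x / (real N * k0 - (real M - 1) * d0)) * u x
     + (1 / (real N * k0 - (real M - 1) * d0)) * integral {d0..x} u"

definition C_tilde :: "nat \<Rightarrow> nat \<Rightarrow> real \<Rightarrow> real \<Rightarrow> (real \<Rightarrow> real) \<Rightarrow> real \<Rightarrow> real" where
  "C_tilde M N d0 k0 c x =
     (1 + x / ((real N - 1) * k0 - real M * d0)) * c x
     - (1 / ((real N - 1) * k0 - real M * d0)) * integral {0..x} c"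

definition feasible :: "nat \<Rightarrow> nat \<Rightarrow> real \<Rightarrow> real \<Rightarrow> (nat \<Rightarrow> real) \<Rightarrow> (nat \<Rightarrow> real) \<Rightarrow> bool" where
  "feasible M N d0 k0 d s \<longleftrightarrow>
     (\<Sum>i\<in>{1..M}. d i) = (\<Sum>i\<in>{1..N}. s i) \<and>
     (\<forall>i\<in>{1..N}. 0 \<le> s i \<and> s i \<le> k0) \<and> (\<forall>i\<in>{1..M}. d i \<ge> d0)"

definition welfare :: "nat \<Rightarrow> nat \<Rightarrow> real \<Rightarrow> real \<Rightarrow> (nat \<Rightarrow> real \<Rightarrow> real) \<Rightarrow> (nat \<Rightarrow> real \<Rightarrow> real)
    \<Rightarrow> (nat \<Rightarrow> real) \<Rightarrow> (nat \<Rightarrow> real) \<Rightarrow> real" where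
  "welfare M N d0 k0 U C d s =
     (\<Sum>i\<in>{1..M}. U_tilde M N d0 k0 (U i) (d i)) - (\<Sum>i\<in>{1..N}. C_tilde M N d0 k0 (C i) (s i))"

definition unique_optimum :: "nat \<Rightarrow> nat \<Rightarrow> real \<Rightarrow> real \<Rightarrow> (nat \<Rightarrow> real \<Rightarrow> real) \<Rightarrow> (nat \<Rightarrow> real \<Rightarrow> real)
    \<Rightarrow> (nat \<Rightarrow> real) \<Rightarrow> (nat \<Rightarrow> real) \<Rightarrow> bool" where
  "unique_optimum M N d0 k0 U C d s \<longleftrightarrow>
     feasible M N d0 k0 d s \<and>
     (\<forall>d' s'. feasible M N d0 k0 d' s' \<longrightarrow> welfare M N d0 k0 U C d' s' \<le> welfare M N d0 k0 U C d s) \<and>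
     (\<forall>d' s'. feasible M N d0 k0 d' s' \<and> welfare M N d0 k0 U C d' s' = welfare M N d0 k0 U C d s
        \<longrightarrow> (\<forall>i\<in>{1..M}. d' i = d i) \<and> (\<forall>i\<in>{1..N}. s' i = s i))"

end

theory Submission imports Defs begin

lemma concave_tangent:
  fixes f :: "real \<Rightarrow> real"
  assumes conc: "concave_on {a..} f" and c: "a \<le> c" and x: "a \<le> x"
    and der: "(f has_real_derivative f') (at c within {a..})"
  shows "f x \<le> f c + f' * (x - c)"
proof (cases "a < c")
  case True
  have cv: "convex_on {a..} (\<lambda>x. - f x)" using conc by (simp add: concave_on_def)
  have "c \<in> interior {a..}" using True by simp
  moreover have "((\<lambda>x. - f x) has_real_derivative - f') (at c within {a..})"
    using der by (intro derivative_intros)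
  ultimately have "- f x - (- f c) \<ge> (- f') * (x - c)"
    using x by (intro convex_on_imp_above_tangent[OF cv]) (auto simp: is_interval_connected)
  then show ?thesis by (simp add: algebra_simps)
next
  case False
  then have ca: "c = a" using c by simp
  show ?thesis
  proof (cases "x = a")
    case True then show ?thesis using ca by simp
  next
    case False
    then have xa: "a < x" using x by simp
    have lim: "((\<lambda>y. (f y - f a) / (y - a)) \<longlongrightarrow> f') (at a within {a<..<x})"
    proof -
      have "(f has_real_derivative f') (at a within {a..})" using der ca by simp
      then have "(f has_real_derivative f') (at a within {a<..<x})"
        by (rule has_field_derivative_subset) auto
      then show ?thesis unfolding has_field_derivative_iff .
    qed
    have nb: "at a within {a<..<x} \<noteq> bot"
      using xa by (subst at_within_eq_bot_iff) auto
    have ev: "eventually (\<lambda>y. (f x - f a) / (x - a) \<le> (f y - f a) / (y - a)) (at a within {a<..<x})"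
      unfolding eventually_at_filter
    proof (rule always_eventually, intro allI impI)
      fix y assume "y \<noteq> a" and y: "y \<in> {a<..<x}"
      have cc: "concave_on {a..x} f" using conc unfolding concave_on_def by (rule convex_on_subset) auto
      have "f y \<ge> (f x - f a) / (x - a) * (y - a) + f a"
        using concave_onD_Icc'[OF cc, of y] y by auto
      then show "(f x - f a) / (x - a) \<le> (f y - f a) / (y - a)"
        using y by (simp add: field_simps)
    qed
    have "(f x - f a) / (x - a) \<le> f'"
      using tendsto_lowerbound[OF lim ev nb] .
    then show ?thesis using xa ca by (simp add: field_simps)
  qed
qed




lemma alg_cons_int:
  fixes B th t K D u d0 :: real
  assumes B: "B > 0" and th: "th \<ge> 0" and t: "t \<ge> 0" and K: "K > 0" and D: "D = K + d0" and d0: "d0 > 0"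
    and hu: "u * (1 - (d0 + th * K / (B + th)) / D) = (B + th) / K"
  shows "u * ((d0 + t * K / (B + t)) - (d0 + th * K / (B + th))) \<le> ((B + t) / K * d0 + t) - ((B + th) / K * d0 + th)"
proof -
  define S where "S = B + th"
  define T where "T = B + t"
  have Dp: "D > 0" using D K d0 by simp
  have Sp: "S > 0" and Tp: "T > 0" using B th t by (auto simp: S_def T_def)
  have a: "D - (d0 + th * K / S) = K * B / S"
  proof -
    have "D - (d0 + th * K / S) = K - th * K / S" using D by simp
    also have "\<dots> = K * (S - th) / S" using Sp by (simp add: field_simps)
    also have "S - th = B" by (simp add: S_def)
    finally show ?thesis .
  qed
  have "1 - (d0 + th * K / S) / D = (D - (d0 + th * K / S)) / D"
    using Dp by (simp add: diff_divide_distrib)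
  then have e1: "1 - (d0 + th * K / S) / D = K * B / (S * D)" unfolding a by simp
  have hu0: "u * (1 - (d0 + th * K / S) / D) = S / K" using hu by (simp only: S_def)
  have hu': "u * (K * B / (S * D)) = S / K" using hu0 by (simp only: e1)
  then have "u * K * B * K = S * S * D" using Sp Dp K by (simp add: field_simps)
  then have u: "u = S * S * D / (K * K * B)" using K B by (simp add: field_simps)
  have e2: "(d0 + t * K / T) - (d0 + th * K / S) = K * B * (t - th) / (T * S)"
  proof -
    have "(d0 + t * K / T) - (d0 + th * K / S) = K * (t * S - th * T) / (T * S)"
      using Sp Tp by (simp add: field_simps)
    also have "t * S - th * T = B * (t - th)" by (simp add: S_def T_def algebra_simps)
    finally show ?thesis by simp
  qed
  have lhs: "u * ((d0 + t * K / T) - (d0 + th * K / S)) = S * D * (t - th) / (K * T)"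
    unfolding e2 u using Sp Tp B K by (simp add: field_simps)
  have rhs: "(T / K * d0 + t) - (S / K * d0 + th) = (t - th) * D / K"
  proof -
    have "T - S = t - th" by (simp add: S_def T_def)
    have "(T / K * d0 + t) - (S / K * d0 + th) = (T - S) * d0 / K + (t - th)"
      by (simp add: algebra_simps diff_divide_distrib)
    also have "\<dots> = (t - th) * d0 / K + (t - th)" using \<open>T - S = t - th\<close> by simp
    also have "\<dots> = (t - th) * (d0 + K) / K" using K by (simp add: field_simps)
    finally show ?thesis using D by (simp add: add.commute)
  qed
  have diff: "(t - th) * D / K - S * D * (t - th) / (K * T) = D * (t - th) * (T - S) / (K * T)"
    using Tp K by (simp add: field_simps)
  have "T - S = t - th" by (simp add: S_def T_def)
  then have "D * (t - th) * (T - S) / (K * T) = (D * ((t - th) * (t - th))) / (K * T)" by (simp add: mult.assoc)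
  moreover have "(D * ((t - th) * (t - th))) / (K * T) \<ge> 0" using Dp mult_nonneg_nonneg[of D "(t - th) * (t - th)"] K Tp
    by (intro divide_nonneg_pos) auto
  ultimately have "D * (t - th) * (T - S) / (K * T) \<ge> 0" by linarith
  then show ?thesis using lhs rhs diff unfolding S_def T_def by simp
qed

lemma alg_cons_corner:
  fixes B t K D u d0 :: real
  assumes B: "B > 0" and t: "t \<ge> 0" and K: "K > 0" and D: "D = K + d0" and d0: "d0 > 0"
    and hu: "u * (1 - d0 / D) \<le> B / K"
  shows "u * ((d0 + t * K / (B + t)) - d0) \<le> ((B + t) / K * d0 + t) - (B / K * d0 + 0)"
proof -
  define T where "T = B + t"
  have Dp: "D > 0" using D K d0 by simp
  have Tp: "T > 0" using B t by (simp add: T_def)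
  have "1 - d0 / D = (D - d0) / D" using Dp by (simp add: diff_divide_distrib)
  then have e1: "1 - d0 / D = K / D" using D by simp
  have "u * K / D \<le> B / K" using hu unfolding e1 by simp
  then have "u * K * K \<le> B * D" using Dp K by (simp add: field_simps)
  then have u: "u \<le> B * D / (K * K)" using K by (simp add: field_simps)
  have nn: "t * K / T \<ge> 0" using t K Tp by simp
  have "u * (t * K / T) \<le> B * D / (K * K) * (t * K / T)" using u nn by (rule mult_right_mono)
  also have "\<dots> = (B / T) * (t * D / K)" using K Tp by (simp add: field_simps)
  also have "\<dots> \<le> 1 * (t * D / K)"
    using B Tp t Dp K by (intro mult_right_mono) (auto simp: T_def)
  also have "\<dots> = (T / K * d0 + t) - (B / K * d0 + 0)"
  proof -
    have "(T / K * d0 + t) - (B / K * d0 + 0) = (T - B) * d0 / K + t" by (simp add: algebra_simps diff_divide_distrib)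
    also have "\<dots> = t * (d0 + K) / K" using K by (simp add: T_def field_simps)
    finally show ?thesis using D by (simp add: add.commute)
  qed
  finally show ?thesis by (simp add: T_def)
qed

lemma alg_supp_int:
  fixes B th t K E v k0 :: real
  assumes B: "B > 0" and th: "th \<ge> 0" and t: "t \<ge> 0" and K: "K = E + k0" and E: "E > 0" and k0: "k0 > 0"
    and hv: "v * (1 + (k0 - th * K / (B + th)) / E) = (B + th) / K"
  shows "((B + t) / K * k0 - t) - ((B + th) / K * k0 - th)
          - v * ((k0 - t * K / (B + t)) - (k0 - th * K / (B + th))) \<le> 0"
proof -
  define S where "S = B + th"
  define T where "T = B + t"
  have Kp: "K > 0" using K E k0 by simp
  have Sp: "S > 0" and Tp: "T > 0" using B th t by (auto simp: S_def T_def)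
  have a: "E + (k0 - th * K / S) = K * B / S"
  proof -
    have "E + (k0 - th * K / S) = K - th * K / S" using K by simp
    also have "\<dots> = K * (S - th) / S" using Sp by (simp add: field_simps)
    also have "S - th = B" by (simp add: S_def)
    finally show ?thesis .
  qed
  have "1 + (k0 - th * K / S) / E = (E + (k0 - th * K / S)) / E"
    using E by (simp add: add_divide_distrib)
  then have e1: "1 + (k0 - th * K / S) / E = K * B / (S * E)" unfolding a by simp
  have hv0: "v * (1 + (k0 - th * K / S) / E) = S / K" using hv by (simp only: S_def)
  have hv': "v * (K * B / (S * E)) = S / K" using hv0 by (simp only: e1)
  then have "v * K * B * K = S * S * E" using Sp E Kp by (simp add: field_simps)
  then have v: "v = S * S * E / (K * K * B)" using Kp B by (simp add: field_simps)
  have e2: "(k0 - t * K / T) - (k0 - th * K / S) = - (K * B * (t - th) / (T * S))"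
  proof -
    have "(k0 - t * K / T) - (k0 - th * K / S) = - (K * (t * S - th * T) / (T * S))"
      using Sp Tp by (simp add: field_simps)
    also have "t * S - th * T = B * (t - th)" by (simp add: S_def T_def algebra_simps)
    finally show ?thesis by simp
  qed
  have lhs: "v * ((k0 - t * K / T) - (k0 - th * K / S)) = - (S * E * (t - th) / (K * T))"
    unfolding e2 v using Sp Tp B Kp by (simp add: field_simps)
  have rhs: "(T / K * k0 - t) - (S / K * k0 - th) = - ((t - th) * E / K)"
  proof -
    have ts: "T - S = t - th" by (simp add: S_def T_def)
    have "(T / K * k0 - t) - (S / K * k0 - th) = (T - S) * k0 / K - (t - th)"
      by (simp add: algebra_simps diff_divide_distrib)
    also have "\<dots> = (t - th) * k0 / K - (t - th)" using ts by simp
    also have "\<dots> = (t - th) * (k0 - K) / K" using Kp by (simp add: field_simps)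
    finally show ?thesis using K by simp
  qed
  have diff: "- ((t - th) * E / K) + S * E * (t - th) / (K * T) = - (E * (t - th) * (T - S) / (K * T))"
    using Tp Kp by (simp add: field_simps)
  have "T - S = t - th" by (simp add: S_def T_def)
  then have "E * (t - th) * (T - S) / (K * T) = (E * ((t - th) * (t - th))) / (K * T)" by (simp add: mult.assoc)
  moreover have "(E * ((t - th) * (t - th))) / (K * T) \<ge> 0" using E mult_nonneg_nonneg[of E "(t - th) * (t - th)"] Kp Tp
    by (intro divide_nonneg_pos) auto
  ultimately have "E * (t - th) * (T - S) / (K * T) \<ge> 0" by linarith
  then show ?thesis using lhs rhs diff unfolding S_def T_def by simp
qed

lemma alg_supp_corner:
  fixes B t K E v k0 :: real
  assumes B: "B > 0" and t: "t \<ge> 0" and K: "K = E + k0" and E: "E > 0" and k0: "k0 > 0"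
    and hv: "v * (1 + k0 / E) \<le> B / K"
  shows "((B + t) / K * k0 - t) - (B / K * k0 - 0) - v * ((k0 - t * K / (B + t)) - k0) \<le> 0"
proof -
  define T where "T = B + t"
  have Kp: "K > 0" using K E k0 by simp
  have Tp: "T > 0" using B t by (simp add: T_def)
  have "1 + k0 / E = (E + k0) / E" using E by (simp add: add_divide_distrib)
  then have e1: "1 + k0 / E = K / E" using K by simp
  have "v * K / E \<le> B / K" using hv unfolding e1 by simp
  then have "v * K * K \<le> B * E" using E Kp by (simp add: field_simps)
  then have v: "v \<le> B * E / (K * K)" using Kp by (simp add: field_simps)
  have nn: "t * K / T \<ge> 0" using t Kp Tp by simp
  have "v * (t * K / T) \<le> B * E / (K * K) * (t * K / T)" using v nn by (rule mult_right_mono)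
  also have "\<dots> = (B / T) * (t * E / K)" using Kp Tp by (simp add: field_simps)
  also have "\<dots> \<le> 1 * (t * E / K)"
    using B Tp t E Kp by (intro mult_right_mono) (auto simp: T_def)
  finally have 1: "v * (t * K / T) \<le> t * E / K" by simp
  have 2: "(T / K * k0 - t) - (B / K * k0 - 0) = - (t * E / K)"
  proof -
    have "(T / K * k0 - t) - (B / K * k0 - 0) = (T - B) * k0 / K - t" by (simp add: algebra_simps diff_divide_distrib)
    also have "\<dots> = t * (k0 - K) / K" using Kp by (simp add: T_def field_simps)
    finally show ?thesis using K by simp
  qed
  show ?thesis using 1 2 unfolding T_def by simp
qed



lemma DERIV_chain_within:
  fixes f g :: "real \<Rightarrow> real"
  assumes g: "(g has_real_derivative Dg) (at x within S)" and sub: "g ` S \<subseteq> T" and x: "x \<in> S"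
    and f: "\<And>y. y \<in> T \<Longrightarrow> (f has_real_derivative f' y) (at y within T)"
  shows "((\<lambda>x. f (g x)) has_real_derivative f' (g x) * Dg) (at x within S)"
proof -
  have "((\<lambda>x. f (g x)) has_derivative (\<lambda>y. f' (g x) * (Dg * y))) (at x within S)"
    using has_derivative_in_compose2[of T f "\<lambda>y. (*) (f' y)" g S x "(*) Dg"] f sub x g
    unfolding has_field_derivative_def by blast
  moreover have "(\<lambda>y. f' (g x) * (Dg * y)) = (*) (f' (g x) * Dg)" by (auto simp: fun_eq_iff mult.assoc)
  ultimately show ?thesis unfolding has_field_derivative_def by simp
qed

lemma h_deriv:
  fixes B K d0 th :: real and S :: "real set"
  assumes "B > 0" "th \<ge> 0"
  shows "((\<lambda>t. d0 + t * K / (B + t)) has_real_derivative K * B / (B + th)^2) (at th within S)"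
proof -
  have nz: "B + th \<noteq> 0" using assms by simp
  show ?thesis
    by (rule derivative_eq_intros refl nz | simp)+ (simp add: power2_eq_square algebra_simps)
qed

lemma sgn_cons:
  fixes u B th K D d0 :: real
  assumes B: "B > 0" and th: "th \<ge> 0" and K: "K > 0" and D: "D = K + d0" and d0: "d0 > 0"
  shows "u * (1 - (d0 + th * K / (B + th)) / D) - (B + th) / K = ((B + th) / D) * (u * (K * B / (B + th)^2) - (0 + (1 / K * d0 + 1)))"
proof -
  define S where "S = B + th"
  have Dp: "D > 0" using D K d0 by simp
  have Sp: "S > 0" using B th by (simp add: S_def)
  have a: "D - (d0 + th * K / S) = K * B / S"
  proof -
    have "D - (d0 + th * K / S) = K - th * K / S" using D by simp
    also have "\<dots> = K * (S - th) / S" using Sp by (simp add: field_simps)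
    also have "S - th = B" by (simp add: S_def)
    finally show ?thesis .
  qed
  have "1 - (d0 + th * K / S) / D = (D - (d0 + th * K / S)) / D"
    using Dp by (simp add: diff_divide_distrib)
  then have e1: "1 - (d0 + th * K / S) / D = K * B / (S * D)" unfolding a by simp
  have dd: "d0 = D - K" using D by simp
  have "u * (K * B / (S * D)) - S / K = (S / D) * (u * (K * B / S^2) - (0 + (1 / K * d0 + 1)))"
    using Sp Dp K unfolding dd by (simp add: field_simps power2_eq_square)
  then show ?thesis using e1 unfolding S_def by simp
qed

lemma sgn_supp:
  fixes v B th K E k0 :: real
  assumes B: "B > 0" and th: "th \<ge> 0" and K: "K = E + k0" and E: "E > 0" and k0: "k0 > 0"
  shows "v * (1 + (k0 - th * K / (B + th)) / E) - (B + th) / K = ((B + th) / E) * ((1 / K * k0 - 1) - v * (- (K * B / (B + th)^2)))"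
proof -
  define S where "S = B + th"
  have Kp: "K > 0" using K E k0 by simp
  have Sp: "S > 0" using B th by (simp add: S_def)
  have a: "E + (k0 - th * K / S) = K * B / S"
  proof -
    have "E + (k0 - th * K / S) = K - th * K / S" using K by simp
    also have "\<dots> = K * (S - th) / S" using Sp by (simp add: field_simps)
    also have "S - th = B" by (simp add: S_def)
    finally show ?thesis .
  qed
  have "1 + (k0 - th * K / S) / E = (E + (k0 - th * K / S)) / E"
    using E by (simp add: add_divide_distrib)
  then have e1: "1 + (k0 - th * K / S) / E = K * B / (S * E)" unfolding a by simp
  have kk: "k0 = K - E" using K by simp
  have "v * (K * B / (S * E)) - S / K = (S / E) * ((1 / K * k0 - 1) - v * (- (K * B / S^2)))"
    using Sp E Kp unfolding kk by (simp add: field_simps power2_eq_square)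
  then show ?thesis using e1 unfolding S_def by simp
qed



lemma h_deriv2:
  fixes B K k0 th :: real and S :: "real set"
  assumes "B > 0" "th \<ge> 0"
  shows "((\<lambda>t. k0 - t * K / (B + t)) has_real_derivative - (K * B / (B + th)^2)) (at th within S)"
proof -
  have nz: "B + th \<noteq> 0" using assms by simp
  show ?thesis
    by (rule derivative_eq_intros refl nz | simp)+ (simp add: power2_eq_square algebra_simps)
qed

lemma lin_deriv:
  fixes B K c th :: real and S :: "real set"
  assumes Kz: "K \<noteq> 0"
  shows "((\<lambda>t. (B + t) / K * c + t) has_real_derivative (1 / K * c + 1)) (at th within S)"
  by (rule derivative_eq_intros refl Kz | simp)+

lemma lin_deriv2:
  fixes B K c th :: real and S :: "real set"
  assumes Kz: "K \<noteq> 0"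
  shows "((\<lambda>t. (B + t) / K * c - t) has_real_derivative (1 / K * c - 1)) (at th within S)"
  by (rule derivative_eq_intros refl Kz | simp)+

lemma foc_gen:
  fixes g :: "real \<Rightarrow> real"
  assumes der: "(g has_real_derivative g') (at th within {0..})" and th: "th \<ge> 0"
    and mx: "\<And>t. t \<ge> 0 \<Longrightarrow> g t \<le> g th"
  shows "g' \<le> 0" "th > 0 \<Longrightarrow> g' = 0"
proof -
  show le: "g' \<le> 0"
  proof (rule ccontr)
    assume "\<not> g' \<le> 0"
    then have "g' > 0" by simp
    from has_real_derivative_pos_inc_right[OF der this] obtain d where d: "d > 0"
      and h: "\<And>h. h > 0 \<Longrightarrow> th + h \<in> {0..} \<Longrightarrow> h < d \<Longrightarrow> g th < g (th + h)" by blast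
    have "g th < g (th + d / 2)" using h[of "d / 2"] d th by auto
    moreover have "g (th + d / 2) \<le> g th" using mx[of "th + d / 2"] d th by auto
    ultimately show False by simp
  qed
  assume thp: "th > 0"
  show "g' = 0"
  proof (rule ccontr)
    assume "g' \<noteq> 0"
    then have "g' < 0" using le by simp
    from has_real_derivative_neg_dec_left[OF der this] obtain d where d: "d > 0"
      and h: "\<And>h. h > 0 \<Longrightarrow> th - h \<in> {0..} \<Longrightarrow> h < d \<Longrightarrow> g th < g (th - h)" by blast
    define e where "e = min d th / 2"
    have e: "e > 0" "e < d" "th - e \<ge> 0" using d thp by (auto simp: e_def)
    have "g th < g (th - e)" using h[of e] e by auto
    moreover have "g (th - e) \<le> g th" using mx[of "th - e"] e by auto
    ultimately show False by simp
  qed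
qed

locale mkt =
  fixes M N :: nat and d0 k0 :: real and U C U' C' :: "nat \<Rightarrow> real \<Rightarrow> real"
  assumes M_pos: "M \<ge> 1" and d0_pos: "d0 > 0" and k0_pos: "k0 > 0"
  and U_concave: "\<And>i. i \<in> {1..M} \<Longrightarrow> concave_on {d0..} (U i)"
  and U_incr: "\<And>i. i \<in> {1..M} \<Longrightarrow> strict_mono_on {d0..} (U i)"
  and U_der: "\<And>i x. i \<in> {1..M} \<Longrightarrow> d0 \<le> x \<Longrightarrow> (U i has_real_derivative U' i x) (at x within {d0..})"
  and U'_cont: "\<And>i. i \<in> {1..M} \<Longrightarrow> continuous_on {d0..} (U' i)"
  and C_convex: "\<And>j. j \<in> {1..N} \<Longrightarrow> convex_on UNIV (C j)"
  and C_incr: "\<And>j. j \<in> {1..N} \<Longrightarrow> strict_mono_on {0..} (C j)"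
  and C_der: "\<And>j x. j \<in> {1..N} \<Longrightarrow> (C j has_real_derivative C' j x) (at x)"
  and C'_cont: "\<And>j. j \<in> {1..N} \<Longrightarrow> continuous_on UNIV (C' j)"
  and C_nonneg: "\<And>j x. j \<in> {1..N} \<Longrightarrow> 0 \<le> x \<Longrightarrow> 0 \<le> C j x"
  and C_zero: "\<And>j x. j \<in> {1..N} \<Longrightarrow> x \<le> 0 \<Longrightarrow> C j x = 0"
  and piv: "real M * d0 < (real N - 1) * k0"
begin

definition K where "K = real N * k0 - real M * d0"
definition E where "E = (real N - 1) * k0 - real M * d0"
definition D where "D = real N * k0 - (real M - 1) * d0"
definition phi where "phi i x = U' i x * (1 - x / D)"
definition psi where "psi j x = C' j x * (1 + x / E)"

lemma E_pos: "E > 0" using piv by (simp add: E_def)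
lemma K_eq: "K = E + k0" by (simp add: K_def E_def algebra_simps)
lemma D_eq: "D = K + d0" by (simp add: K_def D_def algebra_simps)
lemma K_pos: "K > 0" using E_pos K_eq k0_pos by simp
lemma D_gt: "D > d0" using D_eq K_pos by simp
lemma D_pos: "D > 0" using D_gt d0_pos by simp
lemma N_pos: "N \<ge> 1"
proof -
  have "(real N - 1) * k0 > 0" using piv M_pos d0_pos
    by (smt (verit) of_nat_0_le_iff mult_nonneg_nonneg)
  then have "real N - 1 > 0" using k0_pos by (simp add: zero_less_mult_iff)
  then show ?thesis by simp
qed

lemma U_tan:
  assumes "i \<in> {1..M}" "d0 \<le> x" "d0 \<le> y"
  shows "U i x \<le> U i y + U' i y * (x - y)"
  using concave_tangent[OF U_concave[OF assms(1)] assms(3) assms(2) U_der[OF assms(1) assms(3)]] .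

lemma U'_pos:
  assumes i: "i \<in> {1..M}" and x: "d0 \<le> x"
  shows "U' i x > 0"
proof -
  have "U i (x + 1) \<le> U i x + U' i x * (x + 1 - x)" using U_tan[OF i, of "x+1" x] x by simp
  moreover have "U i x < U i (x + 1)"
    by (rule strict_mono_onD[OF U_incr[OF i]]) (use x in auto)
  ultimately show ?thesis by simp
qed

lemma U'_anti:
  assumes i: "i \<in> {1..M}" and x: "d0 \<le> x" and xy: "x \<le> y"
  shows "U' i y \<le> U' i x"
proof (cases "x = y")
  case False
  then have xy': "x < y" using xy by simp
  have "U i y \<le> U i x + U' i x * (y - x)" using U_tan[OF i] x xy by simp
  moreover have "U i x \<le> U i y + U' i y * (x - y)" using U_tan[OF i] x xy by simp
  ultimately have "0 \<le> (U' i x - U' i y) * (y - x)" by (simp add: algebra_simps)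
  then show ?thesis using xy' by (simp add: zero_le_mult_iff)
qed simp

lemma C_tan:
  assumes j: "j \<in> {1..N}"
  shows "C j y + C' j y * (x - y) \<le> C j x"
proof -
  have "C' j y * (x - y) \<le> C j x - C j y"
    by (rule convex_on_imp_above_tangent[OF C_convex[OF j]]) (use C_der[OF j] in auto)
  then show ?thesis by simp
qed

lemma C_ge0: "j \<in> {1..N} \<Longrightarrow> 0 \<le> C j x"
  using C_nonneg C_zero by (cases "0 \<le> x") auto

lemma C'_zero:
  assumes j: "j \<in> {1..N}" and x: "x \<le> 0"
  shows "C' j x = 0"
  by (rule DERIV_local_min[OF C_der[OF j], of 1]) (use C_zero[OF j x] C_ge0[OF j] in auto)

lemma C'_pos:
  assumes j: "j \<in> {1..N}" and x: "0 < x"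
  shows "C' j x > 0"
proof -
  have "C j x + C' j x * (0 - x) \<le> C j 0" by (rule C_tan[OF j])
  moreover have "C j 0 < C j x" by (rule strict_mono_onD[OF C_incr[OF j]]) (use x in auto)
  ultimately have "0 < C' j x * x" by simp
  then show ?thesis using x by (simp add: zero_less_mult_iff)
qed

lemma C'_mono:
  assumes j: "j \<in> {1..N}" and xy: "x \<le> y"
  shows "C' j x \<le> C' j y"
proof (cases "x = y")
  case False
  then have xy': "x < y" using xy by simp
  have "C j x + C' j x * (y - x) \<le> C j y" by (rule C_tan[OF j])
  moreover have "C j y + C' j y * (x - y) \<le> C j x" by (rule C_tan[OF j])
  ultimately have "0 \<le> (C' j y - C' j x) * (y - x)" by (simp add: algebra_simps)
  then show ?thesis using xy' by (simp add: zero_le_mult_iff)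
qed simp

lemma phi_strict:
  assumes i: "i \<in> {1..M}" and x: "d0 \<le> x" and xy: "x < y" and y: "y \<le> D"
  shows "phi i y < phi i x"
proof -
  have a: "U' i y \<le> U' i x" using U'_anti[OF i x] xy by simp
  have b: "U' i y > 0" using U'_pos[OF i] x xy by simp
  have c: "1 - y / D \<ge> 0" using y D_pos by simp
  have d: "1 - y / D < 1 - x / D" using xy D_pos by (simp add: divide_strict_right_mono)
  have "U' i y * (1 - y / D) < U' i y * (1 - x / D)" using b d by simp
  also have "\<dots> \<le> U' i x * (1 - x / D)" using a c d by (intro mult_right_mono) auto
  finally show ?thesis by (simp add: phi_def)
qed

lemma phi_D: "phi i D = 0" using D_pos by (simp add: phi_def)

lemma phi_d0_pos: "i \<in> {1..M} \<Longrightarrow> phi i d0 > 0"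
  using U'_pos[of i d0] D_gt D_pos by (simp add: phi_def)

lemma phi_cont:
  assumes i: "i \<in> {1..M}"
  shows "continuous_on {d0..D} (phi i)"
proof -
  have "continuous_on {d0..D} (U' i)" by (rule continuous_on_subset[OF U'_cont[OF i]]) auto
  moreover have "continuous_on {d0..D} (\<lambda>x. 1 - x / D)"
    by (intro continuous_on_diff continuous_on_const continuous_on_divide continuous_on_id) (use D_pos in auto)
  ultimately show ?thesis unfolding phi_def by (rule continuous_on_mult)
qed

lemma psi_strict:
  assumes j: "j \<in> {1..N}" and x: "0 \<le> x" and xy: "x < y"
  shows "psi j x < psi j y"
proof -
  have a: "C' j x \<le> C' j y" using C'_mono[OF j] xy by simp
  have b: "C' j y > 0" using C'_pos[OF j] x xy by simp
  have c: "1 + x / E \<ge> 0" using x E_pos by simp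
  have d: "1 + x / E < 1 + y / E" using xy E_pos by (simp add: divide_strict_right_mono)
  have "C' j x * (1 + x / E) \<le> C' j y * (1 + x / E)" using a c by (intro mult_right_mono)
  also have "\<dots> < C' j y * (1 + y / E)" using b d by simp
  finally show ?thesis by (simp add: psi_def)
qed

lemma psi_nonpos: "j \<in> {1..N} \<Longrightarrow> x \<le> 0 \<Longrightarrow> psi j x = 0"
  using C'_zero by (simp add: psi_def)

lemma psi_cont:
  assumes j: "j \<in> {1..N}"
  shows "continuous_on UNIV (psi j)"
proof -
  have "continuous_on UNIV (\<lambda>x. 1 + x / E)"
    by (intro continuous_on_add continuous_on_const continuous_on_divide continuous_on_id) (use E_pos in auto)
  with C'_cont[OF j] show ?thesis unfolding psi_def by (rule continuous_on_mult)
qed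


definition cons_ok where
  "cons_ok i p x \<longleftrightarrow> d0 \<le> x \<and> x \<le> D \<and> (phi i x = p \<or> (x = d0 \<and> phi i d0 \<le> p))"
definition supp_ok where
  "supp_ok j p s \<longleftrightarrow> 0 \<le> s \<and> s \<le> k0 \<and> (psi j s = p \<or> (s = k0 \<and> psi j k0 \<le> p))"

lemma phi_le_d0: "i \<in> {1..M} \<Longrightarrow> d0 \<le> x \<Longrightarrow> x \<le> D \<Longrightarrow> phi i x \<le> phi i d0"
  using phi_strict[of i d0 x] by (cases "x = d0") auto

lemma psi_le_k0: "j \<in> {1..N} \<Longrightarrow> 0 \<le> s \<Longrightarrow> s \<le> k0 \<Longrightarrow> psi j s \<le> psi j k0"
  using psi_strict[of j s k0] by (cases "s = k0") auto

lemma cons_mono: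
  assumes i: "i \<in> {1..M}" and p: "p1 \<le> p2" and c1: "cons_ok i p1 x1" and c2: "cons_ok i p2 x2"
  shows "x2 \<le> x1"
proof (rule ccontr)
  assume "\<not> x2 \<le> x1"
  then have lt: "x1 < x2" by simp
  have x1: "d0 \<le> x1" using c1 by (simp add: cons_ok_def)
  have x2: "x2 \<le> D" using c2 by (simp add: cons_ok_def)
  have "phi i x2 = p2" using c2 lt x1 by (auto simp: cons_ok_def)
  moreover have "phi i x2 < phi i x1" using phi_strict[OF i x1 lt x2] .
  moreover have "phi i x1 \<le> p1" using c1 by (auto simp: cons_ok_def)
  ultimately show False using p by simp
qed

lemma supp_mono:
  assumes j: "j \<in> {1..N}" and p: "p1 \<le> p2" and c1: "supp_ok j p1 s1" and c2: "supp_ok j p2 s2"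
  shows "s1 \<le> s2"
proof (rule ccontr)
  assume "\<not> s1 \<le> s2"
  then have lt: "s2 < s1" by simp
  have s2: "0 \<le> s2" using c2 by (simp add: supp_ok_def)
  have s1: "s1 \<le> k0" using c1 by (simp add: supp_ok_def)
  have "psi j s2 = p2" using c2 lt s1 by (auto simp: supp_ok_def)
  moreover have "psi j s2 < psi j s1" using psi_strict[OF j s2 lt] .
  moreover have "psi j s1 \<le> p1" using c1 by (auto simp: supp_ok_def)
  ultimately show False using p by simp
qed

lemma cons_unique: "i \<in> {1..M} \<Longrightarrow> cons_ok i p x \<Longrightarrow> cons_ok i p y \<Longrightarrow> x = y"
  using cons_mono[of i p p x y] cons_mono[of i p p y x] by simp

lemma supp_unique: "j \<in> {1..N} \<Longrightarrow> supp_ok j p x \<Longrightarrow> supp_ok j p y \<Longrightarrow> x = y"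
  using supp_mono[of j p p x y] supp_mono[of j p p y x] by simp

definition clearing where
  "clearing p d s \<longleftrightarrow> p > 0 \<and> (\<forall>i\<in>{1..M}. cons_ok i p (d i)) \<and> (\<forall>j\<in>{1..N}. supp_ok j p (s j))
     \<and> sum d {1..M} = sum s {1..N}"

lemma clearing_lt:
  assumes c1: "clearing p1 d1 s1" and c2: "clearing p2 d2 s2" and lt: "p1 < p2"
  shows False
proof -
  have dle: "\<forall>i\<in>{1..M}. d2 i \<le> d1 i"
  proof
    fix i assume i: "i \<in> {1..M}"
    show "d2 i \<le> d1 i" by (rule cons_mono[OF i, of p1 p2]) (use c1 c2 lt i in \<open>auto simp: clearing_def\<close>)
  qed
  have sle: "\<forall>j\<in>{1..N}. s1 j \<le> s2 j"
  proof
    fix j assume j: "j \<in> {1..N}"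
    show "s1 j \<le> s2 j" by (rule supp_mono[OF j, of p1 p2]) (use c1 c2 lt j in \<open>auto simp: clearing_def\<close>)
  qed
  have sd: "sum d2 {1..M} \<le> sum d1 {1..M}" using dle by (intro sum_mono) auto
  have ss: "sum s1 {1..N} \<le> sum s2 {1..N}" using sle by (intro sum_mono) auto
  have e1: "sum d1 {1..M} = sum s1 {1..N}" and e2: "sum d2 {1..M} = sum s2 {1..N}"
    using c1 c2 by (auto simp: clearing_def)
  have deq: "\<forall>i\<in>{1..M}. d2 i = d1 i"
  proof (rule ccontr)
    assume "\<not> (\<forall>i\<in>{1..M}. d2 i = d1 i)"
    then have "\<exists>i\<in>{1..M}. d2 i < d1 i" using dle by force
    then have "sum d2 {1..M} < sum d1 {1..M}" using dle by (intro sum_strict_mono_ex1) auto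
    then show False using ss e1 e2 by simp
  qed
  have seq: "\<forall>j\<in>{1..N}. s1 j = s2 j"
  proof (rule ccontr)
    assume "\<not> (\<forall>j\<in>{1..N}. s1 j = s2 j)"
    then have "\<exists>j\<in>{1..N}. s1 j < s2 j" using sle by force
    then have "sum s1 {1..N} < sum s2 {1..N}" using sle by (intro sum_strict_mono_ex1) auto
    then show False using sd e1 e2 by simp
  qed
  have d0s: "\<forall>i\<in>{1..M}. d1 i = d0"
  proof
    fix i assume i: "i \<in> {1..M}"
    have a: "cons_ok i p1 (d1 i)" and b: "cons_ok i p2 (d1 i)"
      using c1 c2 i deq by (auto simp: clearing_def)
    show "d1 i = d0"
    proof (rule ccontr)
      assume ne: "d1 i \<noteq> d0"
      then have "phi i (d1 i) = p1" "phi i (d1 i) = p2" using a b by (auto simp: cons_ok_def)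
      then show False using lt by simp
    qed
  qed
  have k0s: "\<forall>j\<in>{1..N}. s1 j = k0"
  proof
    fix j assume j: "j \<in> {1..N}"
    have a: "supp_ok j p1 (s1 j)" and b: "supp_ok j p2 (s1 j)"
      using c1 c2 j seq by (auto simp: clearing_def)
    show "s1 j = k0"
    proof (rule ccontr)
      assume ne: "s1 j \<noteq> k0"
      then have "psi j (s1 j) = p1" "psi j (s1 j) = p2" using a b by (auto simp: supp_ok_def)
      then show False using lt by simp
    qed
  qed
  have "sum d1 {1..M} = real M * d0" using d0s by simp
  moreover have "sum s1 {1..N} = real N * k0" using k0s by simp
  moreover have "real M * d0 < real N * k0" using piv k0_pos by (simp add: algebra_simps)
  ultimately show False using e1 by simp
qed

lemma clearing_unique:
  assumes c1: "clearing p1 d1 s1" and c2: "clearing p2 d2 s2"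
  shows "p1 = p2" "\<forall>i\<in>{1..M}. d1 i = d2 i" "\<forall>j\<in>{1..N}. s1 j = s2 j"
proof -
  show p: "p1 = p2" using clearing_lt[OF c1 c2] clearing_lt[OF c2 c1] by (cases p1 p2 rule: linorder_cases) auto
  show "\<forall>i\<in>{1..M}. d1 i = d2 i" using c1 c2 p cons_unique by (auto simp: clearing_def)
  show "\<forall>j\<in>{1..N}. s1 j = s2 j" using c1 c2 p supp_unique by (auto simp: clearing_def)
qed


lemma phi_inj: "i \<in> {1..M} \<Longrightarrow> inj_on (phi i) {d0..D}"
proof (rule inj_onI)
  fix x y assume i: "i \<in> {1..M}" and x: "x \<in> {d0..D}" and y: "y \<in> {d0..D}" and e: "phi i x = phi i y"
  show "x = y"
  proof (cases x y rule: linorder_cases)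
    case less then show ?thesis using phi_strict[OF i _ less, of] x y e by auto
  next
    case greater then show ?thesis using phi_strict[OF i _ greater, of] x y e by auto
  qed
qed

lemma psi_inj: "j \<in> {1..N} \<Longrightarrow> inj_on (psi j) {0..k0}"
proof (rule inj_onI)
  fix x y assume j: "j \<in> {1..N}" and x: "x \<in> {0..k0}" and y: "y \<in> {0..k0}" and e: "psi j x = psi j y"
  show "x = y"
  proof (cases x y rule: linorder_cases)
    case less then show ?thesis using psi_strict[OF j _ less] x y e by auto
  next
    case greater then show ?thesis using psi_strict[OF j _ greater] x y e by auto
  qed
qed

lemma phi_image: assumes i: "i \<in> {1..M}" shows "phi i ` {d0..D} = {0..phi i d0}"
proof
  show "phi i ` {d0..D} \<subseteq> {0..phi i d0}"
  proof
    fix y assume "y \<in> phi i ` {d0..D}"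
    then obtain x where x: "x \<in> {d0..D}" and y: "y = phi i x" by auto
    have "phi i D \<le> phi i x" using phi_strict[OF i, of x D] x by (cases "x = D") auto
    then show "y \<in> {0..phi i d0}" using phi_le_d0[OF i] x y phi_D by auto
  qed
  show "{0..phi i d0} \<subseteq> phi i ` {d0..D}"
  proof
    fix y assume y: "y \<in> {0..phi i d0}"
    have "\<exists>x. d0 \<le> x \<and> x \<le> D \<and> phi i x = y"
      by (rule IVT2') (use y phi_D D_gt phi_cont[OF i] in auto)
    then show "y \<in> phi i ` {d0..D}" by auto
  qed
qed

lemma psi_0: "j \<in> {1..N} \<Longrightarrow> psi j 0 = 0" using psi_nonpos by simp

lemma psi_image: assumes j: "j \<in> {1..N}" shows "psi j ` {0..k0} = {0..psi j k0}"
proof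
  show "psi j ` {0..k0} \<subseteq> {0..psi j k0}"
  proof
    fix y assume "y \<in> psi j ` {0..k0}"
    then obtain x where x: "x \<in> {0..k0}" and y: "y = psi j x" by auto
    have "psi j 0 \<le> psi j x" using psi_strict[OF j, of 0 x] x by (cases "x = 0") auto
    then show "y \<in> {0..psi j k0}" using psi_le_k0[OF j] x y psi_0[OF j] by auto
  qed
  show "{0..psi j k0} \<subseteq> psi j ` {0..k0}"
  proof
    fix y assume y: "y \<in> {0..psi j k0}"
    have "\<exists>x. 0 \<le> x \<and> x \<le> k0 \<and> psi j x = y"
      by (rule IVT') (use y psi_0[OF j] k0_pos continuous_on_subset[OF psi_cont[OF j]] in auto)
    then show "y \<in> psi j ` {0..k0}" by auto
  qed
qed

definition dd where "dd i p = the_inv_into {d0..D} (phi i) (min p (phi i d0))"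
definition ss where "ss j p = the_inv_into {0..k0} (psi j) (min p (psi j k0))"

lemma dd_ok:
  assumes i: "i \<in> {1..M}" and p: "0 \<le> p"
  shows "cons_ok i p (dd i p)"
proof -
  let ?q = "min p (phi i d0)"
  have q: "?q \<in> phi i ` {d0..D}" using phi_image[OF i] p phi_d0_pos[OF i] by auto
  have x: "dd i p \<in> {d0..D}" unfolding dd_def
    by (rule the_inv_into_into[OF phi_inj[OF i] q]) simp
  have fx: "phi i (dd i p) = ?q" unfolding dd_def
    by (rule f_the_inv_into_f[OF phi_inj[OF i] q])
  show ?thesis
  proof (cases "p \<le> phi i d0")
    case True then show ?thesis using x fx by (simp add: cons_ok_def)
  next
    case False
    then have "phi i (dd i p) = phi i d0" using fx by simp
    then have "dd i p = d0" using inj_onD[OF phi_inj[OF i]] x D_gt by force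
    then show ?thesis using False D_gt by (simp add: cons_ok_def)
  qed
qed

lemma ss_ok:
  assumes j: "j \<in> {1..N}" and p: "0 \<le> p"
  shows "supp_ok j p (ss j p)"
proof -
  let ?q = "min p (psi j k0)"
  have pk: "0 \<le> psi j k0" using psi_le_k0[OF j, of 0] psi_0[OF j] k0_pos by simp
  have q: "?q \<in> psi j ` {0..k0}" using psi_image[OF j] p pk by auto
  have x: "ss j p \<in> {0..k0}" unfolding ss_def
    by (rule the_inv_into_into[OF psi_inj[OF j] q]) simp
  have fx: "psi j (ss j p) = ?q" unfolding ss_def
    by (rule f_the_inv_into_f[OF psi_inj[OF j] q])
  show ?thesis
  proof (cases "p \<le> psi j k0")
    case True then show ?thesis using x fx by (simp add: supp_ok_def)
  next
    case False
    then have "psi j (ss j p) = psi j k0" using fx by simp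
    then have "ss j p = k0" using inj_onD[OF psi_inj[OF j]] x k0_pos by force
    then show ?thesis using False k0_pos by (simp add: supp_ok_def)
  qed
qed

lemma dd_cont:
  assumes i: "i \<in> {1..M}"
  shows "continuous_on {0..} (dd i)"
proof -
  have c1: "continuous_on (phi i ` {d0..D}) (the_inv_into {d0..D} (phi i))"
    by (rule continuous_on_inv[OF phi_cont[OF i] compact_Icc])
       (use the_inv_into_f_f[OF phi_inj[OF i]] in auto)
  have c2: "continuous_on {0..} (\<lambda>p::real. min p (phi i d0))"
    by (intro continuous_intros)
  have sub: "(\<lambda>p::real. min p (phi i d0)) ` {0..} \<subseteq> phi i ` {d0..D}"
    using phi_image[OF i] phi_d0_pos[OF i] by auto
  show ?thesis unfolding dd_def[abs_def]
    by (rule continuous_on_compose2[OF c1 c2 sub])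
qed

lemma ss_cont:
  assumes j: "j \<in> {1..N}"
  shows "continuous_on {0..} (ss j)"
proof -
  have pk: "0 \<le> psi j k0" using psi_le_k0[OF j, of 0] psi_0[OF j] k0_pos by simp
  have c1: "continuous_on (psi j ` {0..k0}) (the_inv_into {0..k0} (psi j))"
    by (rule continuous_on_inv[OF continuous_on_subset[OF psi_cont[OF j]] compact_Icc])
       (use the_inv_into_f_f[OF psi_inj[OF j]] in auto)
  have c2: "continuous_on {0..} (\<lambda>p::real. min p (psi j k0))"
    by (intro continuous_intros)
  have sub: "(\<lambda>p::real. min p (psi j k0)) ` {0..} \<subseteq> psi j ` {0..k0}"
    using psi_image[OF j] pk by auto
  show ?thesis unfolding ss_def[abs_def]
    by (rule continuous_on_compose2[OF c1 c2 sub])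
qed

lemma clearing_exists: "\<exists>p d s. clearing p d s"
proof -
  define F where "F p = sum (\<lambda>j. ss j p) {1..N} - sum (\<lambda>i. dd i p) {1..M}" for p
  define P where "P = sum (\<lambda>i. phi i d0) {1..M} + sum (\<lambda>j. psi j k0) {1..N} + 1"
  have pk: "0 \<le> psi j k0" if j: "j \<in> {1..N}" for j
    using psi_le_k0[OF j, of 0] psi_0[OF j] k0_pos by simp
  have ph: "\<And>i. i \<in> {1..M} \<Longrightarrow> 0 \<le> phi i d0" using phi_d0_pos by (simp add: less_imp_le)
  have s1: "0 \<le> sum (\<lambda>j. psi j k0) {1..N}" using pk by (intro sum_nonneg) auto
  have s2: "0 \<le> sum (\<lambda>i. phi i d0) {1..M}" using ph by (intro sum_nonneg) auto
  have P0: "0 \<le> P" using s1 s2 by (simp add: P_def)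
  have phiP: "phi i d0 \<le> P" if i: "i \<in> {1..M}" for i
  proof -
    have "phi i d0 \<le> sum (\<lambda>i. phi i d0) {1..M}" using i ph by (intro member_le_sum) auto
    then show ?thesis using s1 by (simp add: P_def)
  qed
  have psiP: "psi j k0 \<le> P" if j: "j \<in> {1..N}" for j
  proof -
    have "psi j k0 \<le> sum (\<lambda>j. psi j k0) {1..N}" using j pk by (intro member_le_sum) auto
    then show ?thesis using s2 by (simp add: P_def)
  qed
  have dd0: "dd i 0 = D" if i: "i \<in> {1..M}" for i
    by (rule cons_unique[OF i dd_ok[OF i order.refl]]) (use D_gt phi_D in \<open>simp add: cons_ok_def\<close>)
  have ss0: "ss j 0 = 0" if j: "j \<in> {1..N}" for j
    by (rule supp_unique[OF j ss_ok[OF j order.refl]]) (use k0_pos psi_0[OF j] in \<open>simp add: supp_ok_def\<close>)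
  have ddP: "dd i P = d0" if i: "i \<in> {1..M}" for i
    by (rule cons_unique[OF i dd_ok[OF i P0]]) (use D_gt phiP[OF i] in \<open>simp add: cons_ok_def\<close>)
  have ssP: "ss j P = k0" if j: "j \<in> {1..N}" for j
    by (rule supp_unique[OF j ss_ok[OF j P0]]) (use k0_pos psiP[OF j] in \<open>simp add: supp_ok_def\<close>)
  have F0: "F 0 < 0"
  proof -
    have "F 0 = - (real M * D)" using dd0 ss0 by (simp add: F_def)
    then show ?thesis using M_pos D_pos by simp
  qed
  have FP: "F P > 0"
  proof -
    have "F P = real N * k0 - real M * d0" using ddP ssP by (simp add: F_def)
    then show ?thesis using piv k0_pos by (simp add: algebra_simps)
  qed
  have cF: "continuous_on {0..P} F"
  proof -
    have "continuous_on {0..P} (\<lambda>p. sum (\<lambda>j. ss j p) {1..N})"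
      by (intro continuous_on_sum) (auto intro: continuous_on_subset[OF ss_cont])
    moreover have "continuous_on {0..P} (\<lambda>p. sum (\<lambda>i. dd i p) {1..M})"
      by (intro continuous_on_sum) (auto intro: continuous_on_subset[OF dd_cont])
    ultimately show ?thesis unfolding F_def[abs_def] by (rule continuous_on_diff)
  qed
  obtain p where p: "0 \<le> p" "p \<le> P" "F p = 0"
    using IVT'[of F 0 0 P] F0 FP P0 cF by auto
  have pp: "p > 0" using p F0 by (cases "p = 0") auto
  have "clearing p (\<lambda>i. dd i p) (\<lambda>j. ss j p)"
    unfolding clearing_def using pp dd_ok ss_ok p(3) by (simp add: F_def)
  then show ?thesis by blast
qed


lemma strict_by_deriv:
  fixes f g :: "real \<Rightarrow> real"
  assumes der: "\<And>x. x \<in> {a..b} \<Longrightarrow> (f has_real_derivative g x) (at x within {a..b})"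
    and dec: "\<And>x y. x \<in> {a..b} \<Longrightarrow> y \<in> {a..b} \<Longrightarrow> x < y \<Longrightarrow> g y < g x"
    and x: "x \<in> {a..b}" and y: "y \<in> {a..b}" and ne: "x \<noteq> y"
  shows "f x < f y + g y * (x - y)"
proof -
  have mvt: "\<exists>z. u < z \<and> z < v \<and> f v - f u = (v - u) * g z"
    if uv: "u \<in> {a..b}" "v \<in> {a..b}" "u < v" for u v
  proof -
    have cont: "continuous_on {u..v} f"
      using DERIV_continuous_on[OF der] by (rule continuous_on_subset) (use uv in auto)
    have dif: "f differentiable (at z)" if "u < z" "z < v" for z
    proof -
      have "z \<in> interior {a..b}" using that uv by auto
      then have "(f has_real_derivative g z) (at z)"
        using der[of z] that uv at_within_interior[of z "{a..b}"] by auto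
      then show ?thesis using real_differentiable_def by blast
    qed
    obtain l z where z: "u < z" "z < v" "DERIV f z :> l" "f v - f u = (v - u) * l"
      using MVT[OF uv(3) cont dif] by blast
    have "z \<in> interior {a..b}" using z uv by auto
    then have "(f has_real_derivative g z) (at z)"
      using der[of z] z uv at_within_interior[of z "{a..b}"] by auto
    then have "l = g z" using DERIV_unique z(3) by blast
    then show ?thesis using z by blast
  qed
  show ?thesis
  proof (cases "y < x")
    case True
    obtain z where z: "y < z" "z < x" "f x - f y = (x - y) * g z" using mvt[OF y x True] by blast
    have "g z < g y" using dec[of y z] z x y by auto
    then have "(x - y) * g z < (x - y) * g y" using True by simp
    then show ?thesis using z by (simp add: algebra_simps)
  next
    case False
    then have xy: "x < y" using ne by simp
    obtain z where z: "x < z" "z < y" "f y - f x = (y - x) * g z" using mvt[OF x y xy] by blast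
    have "g y < g z" using dec[of z y] z x y by auto
    then have "(y - x) * g y < (y - x) * g z" using xy by simp
    then show ?thesis using z by (simp add: algebra_simps)
  qed
qed

lemma U_tilde_eq: "U_tilde M N d0 k0 u x = (1 - x / D) * u x + (1 / D) * integral {d0..x} u"
  by (simp add: U_tilde_def D_def)

lemma C_tilde_eq: "C_tilde M N d0 k0 c x = (1 + x / E) * c x - (1 / E) * integral {0..x} c"
  by (simp add: C_tilde_def E_def)

lemma Ut_der:
  assumes i: "i \<in> {1..M}" and x: "x \<in> {d0..D}"
  shows "((\<lambda>x. U_tilde M N d0 k0 (U i) x) has_real_derivative phi i x) (at x within {d0..D})"
proof -
  have Ucont: "continuous_on {d0..D} (U i)"
    by (rule DERIV_continuous_on[of _ _ "U' i"])
       (rule has_field_derivative_subset[OF U_der[OF i]], auto)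
  have dU: "(U i has_real_derivative U' i x) (at x within {d0..D})"
    by (rule has_field_derivative_subset[OF U_der[OF i]]) (use x in auto)
  have dI: "((\<lambda>x. integral {d0..x} (U i)) has_real_derivative U i x) (at x within {d0..D})"
    by (rule integral_has_real_derivative[OF Ucont x])
  have "((\<lambda>x. (1 - x / D) * U i x + (1 / D) * integral {d0..x} (U i)) has_real_derivative
        (0 - 1 / D) * U i x + U' i x * (1 - x / D) + (1 / D) * U i x) (at x within {d0..D})"
    by (intro DERIV_add DERIV_mult DERIV_cmult DERIV_diff DERIV_const dU dI DERIV_cdivide DERIV_ident[THEN DERIV_cdivide[where c=D], simplified])
  moreover have "(0 - 1 / D) * U i x + U' i x * (1 - x / D) + (1 / D) * U i x = phi i x"
    by (simp add: phi_def algebra_simps)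
  ultimately show ?thesis unfolding U_tilde_eq by simp
qed

lemma Ct_der:
  assumes j: "j \<in> {1..N}" and x: "x \<in> {0..k0}"
  shows "((\<lambda>x. C_tilde M N d0 k0 (C j) x) has_real_derivative psi j x) (at x within {0..k0})"
proof -
  have Ccont: "continuous_on {0..k0} (C j)"
    by (rule DERIV_continuous_on[of _ _ "C' j"])
       (rule has_field_derivative_at_within[OF C_der[OF j]])
  have dC: "(C j has_real_derivative C' j x) (at x within {0..k0})"
    by (rule has_field_derivative_at_within[OF C_der[OF j]])
  have dI: "((\<lambda>x. integral {0..x} (C j)) has_real_derivative C j x) (at x within {0..k0})"
    by (rule integral_has_real_derivative[OF Ccont x])
  have "((\<lambda>x. (1 + x / E) * C j x - (1 / E) * integral {0..x} (C j)) has_real_derivative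
        (0 + 1 / E) * C j x + C' j x * (1 + x / E) - (1 / E) * C j x) (at x within {0..k0})"
    by (intro DERIV_add DERIV_mult DERIV_cmult DERIV_diff DERIV_const dC dI DERIV_ident[THEN DERIV_cdivide[where c=E], simplified])
  moreover have "(0 + 1 / E) * C j x + C' j x * (1 + x / E) - (1 / E) * C j x = psi j x"
    by (simp add: psi_def algebra_simps)
  ultimately show ?thesis unfolding C_tilde_eq by simp
qed

lemma Ut_strict:
  assumes i: "i \<in> {1..M}" and x: "x \<in> {d0..D}" and y: "y \<in> {d0..D}" and ne: "x \<noteq> y"
  shows "U_tilde M N d0 k0 (U i) x < U_tilde M N d0 k0 (U i) y + phi i y * (x - y)"
  by (rule strict_by_deriv[OF Ut_der[OF i] _ x y ne]) (use phi_strict[OF i] in auto)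

lemma Ct_strict:
  assumes j: "j \<in> {1..N}" and x: "x \<in> {0..k0}" and y: "y \<in> {0..k0}" and ne: "x \<noteq> y"
  shows "C_tilde M N d0 k0 (C j) y + psi j y * (x - y) < C_tilde M N d0 k0 (C j) x"
proof -
  have "- C_tilde M N d0 k0 (C j) x < - C_tilde M N d0 k0 (C j) y + (- psi j y) * (x - y)"
    by (rule strict_by_deriv[of 0 k0 "\<lambda>x. - C_tilde M N d0 k0 (C j) x" "\<lambda>x. - psi j x", OF _ _ x y ne])
       (use psi_strict[OF j] DERIV_minus[OF Ct_der[OF j]] in auto)
  then show ?thesis by simp
qed


lemma feasible_le_D:
  assumes f: "feasible M N d0 k0 d s" and i: "i \<in> {1..M}"
  shows "d i \<le> D"
proof -
  have fin: "finite {1..M}" by simp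
  have "sum d {1..M} = d i + sum d ({1..M} - {i})" using sum.remove[OF fin i] .
  moreover have "of_nat (card ({1..M} - {i})) * d0 \<le> sum d ({1..M} - {i})"
    using f by (intro sum_bounded_below) (auto simp: feasible_def)
  moreover have "card ({1..M} - {i}) = M - 1" using i by simp
  moreover have "sum s {1..N} \<le> of_nat (card {1..N}) * k0"
    using f by (intro sum_bounded_above) (auto simp: feasible_def)
  moreover have "sum d {1..M} = sum s {1..N}" using f by (simp add: feasible_def)
  ultimately have "d i + real (M - 1) * d0 \<le> real N * k0" by simp
  then show ?thesis using M_pos by (simp add: D_def of_nat_diff algebra_simps)
qed

lemma welfare_opt:
  assumes cl: "clearing p d s"
  shows "unique_optimum M N d0 k0 U C d s"
proof -
  let ?Ut = "\<lambda>i x. U_tilde M N d0 k0 (U i) x"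
  let ?Ct = "\<lambda>j x. C_tilde M N d0 k0 (C j) x"
  have co: "\<And>i. i \<in> {1..M} \<Longrightarrow> cons_ok i p (d i)" and so: "\<And>j. j \<in> {1..N} \<Longrightarrow> supp_ok j p (s j)"
    and pp: "p > 0" and bal: "sum d {1..M} = sum s {1..N}"
    using cl by (auto simp: clearing_def)
  have feas: "feasible M N d0 k0 d s"
    unfolding feasible_def using bal co so by (auto simp: cons_ok_def supp_ok_def)
  have key: "welfare M N d0 k0 U C d' s' < welfare M N d0 k0 U C d s"
    if f': "feasible M N d0 k0 d' s'" and ne: "\<not> ((\<forall>i\<in>{1..M}. d' i = d i) \<and> (\<forall>j\<in>{1..N}. s' j = s j))"
    for d' s'
  proof -
    define a where "a i = ?Ut i (d' i) - ?Ut i (d i) - p * (d' i - d i)" for i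
    define b where "b j = ?Ct j (s' j) - ?Ct j (s j) - p * (s' j - s j)" for j
    have d'r: "d' i \<in> {d0..D}" if i: "i \<in> {1..M}" for i
      using f' i feasible_le_D[OF f' i] by (auto simp: feasible_def)
    have dr: "d i \<in> {d0..D}" if i: "i \<in> {1..M}" for i using co[OF i] by (auto simp: cons_ok_def)
    have s'r: "s' j \<in> {0..k0}" if j: "j \<in> {1..N}" for j using f' j by (auto simp: feasible_def)
    have sr: "s j \<in> {0..k0}" if j: "j \<in> {1..N}" for j using so[OF j] by (auto simp: supp_ok_def)
    have phip: "phi i (d i) * (d' i - d i) \<le> p * (d' i - d i)" if i: "i \<in> {1..M}" for i
    proof (cases "phi i (d i) = p")
      case False
      then have "d i = d0" "phi i d0 \<le> p" using co[OF i] by (auto simp: cons_ok_def)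
      then show ?thesis using d'r[OF i] by (intro mult_right_mono) auto
    qed simp
    have psip: "p * (s' j - s j) \<le> psi j (s j) * (s' j - s j)" if j: "j \<in> {1..N}" for j
    proof (cases "psi j (s j) = p")
      case False
      then have "s j = k0" "psi j k0 \<le> p" using so[OF j] by (auto simp: supp_ok_def)
      then show ?thesis using s'r[OF j] by (intro mult_right_mono_neg) auto
    qed simp
    have a_le: "a i \<le> 0" if i: "i \<in> {1..M}" for i
    proof (cases "d' i = d i")
      case False
      then show ?thesis using Ut_strict[OF i d'r[OF i] dr[OF i] False] phip[OF i] by (simp add: a_def)
    qed (simp add: a_def)
    have a_lt: "a i < 0" if i: "i \<in> {1..M}" and n: "d' i \<noteq> d i" for i
      using Ut_strict[OF i d'r[OF i] dr[OF i] n] phip[OF i] by (simp add: a_def)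
    have b_ge: "0 \<le> b j" if j: "j \<in> {1..N}" for j
    proof (cases "s' j = s j")
      case False
      then show ?thesis using Ct_strict[OF j s'r[OF j] sr[OF j] False] psip[OF j] by (simp add: b_def)
    qed (simp add: b_def)
    have b_gt: "0 < b j" if j: "j \<in> {1..N}" and n: "s' j \<noteq> s j" for j
      using Ct_strict[OF j s'r[OF j] sr[OF j] n] psip[OF j] by (simp add: b_def)
    have bal': "sum d' {1..M} = sum s' {1..N}" using f' by (simp add: feasible_def)
    have "welfare M N d0 k0 U C d' s' - welfare M N d0 k0 U C d s = sum a {1..M} - sum b {1..N}"
    proof -
      have "sum a {1..M} = sum (\<lambda>i. ?Ut i (d' i)) {1..M} - sum (\<lambda>i. ?Ut i (d i)) {1..M} - p * (sum d' {1..M} - sum d {1..M})"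
      proof -
        have "sum a {1..M} = (\<Sum>i\<in>{1..M}. ?Ut i (d' i) - ?Ut i (d i) - p * (d' i - d i))"
          by (rule sum.cong) (simp_all add: a_def)
        also have "\<dots> = (\<Sum>i\<in>{1..M}. ?Ut i (d' i)) - (\<Sum>i\<in>{1..M}. ?Ut i (d i)) - (\<Sum>i\<in>{1..M}. p * (d' i - d i))"
          by (simp only: sum_subtractf)
        also have "(\<Sum>i\<in>{1..M}. p * (d' i - d i)) = p * (sum d' {1..M} - sum d {1..M})"
          by (simp only: sum_distrib_left[symmetric] sum_subtractf)
        finally show ?thesis .
      qed
      moreover have "sum b {1..N} = sum (\<lambda>j. ?Ct j (s' j)) {1..N} - sum (\<lambda>j. ?Ct j (s j)) {1..N} - p * (sum s' {1..N} - sum s {1..N})"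
      proof -
        have "sum b {1..N} = (\<Sum>j\<in>{1..N}. ?Ct j (s' j) - ?Ct j (s j) - p * (s' j - s j))"
          by (rule sum.cong) (simp_all add: b_def)
        also have "\<dots> = (\<Sum>j\<in>{1..N}. ?Ct j (s' j)) - (\<Sum>j\<in>{1..N}. ?Ct j (s j)) - (\<Sum>j\<in>{1..N}. p * (s' j - s j))"
          by (simp only: sum_subtractf)
        also have "(\<Sum>j\<in>{1..N}. p * (s' j - s j)) = p * (sum s' {1..N} - sum s {1..N})"
          by (simp only: sum_distrib_left[symmetric] sum_subtractf)
        finally show ?thesis .
      qed
      ultimately show ?thesis using bal bal' by (simp add: welfare_def)
    qed
    moreover have "sum a {1..M} - sum b {1..N} < 0"
    proof -
      have A: "sum a {1..M} \<le> 0" using a_le by (intro sum_nonpos) auto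
      have B: "0 \<le> sum b {1..N}" using b_ge by (intro sum_nonneg) auto
      show ?thesis
      proof (cases "\<forall>i\<in>{1..M}. d' i = d i")
        case False
        then obtain i where i: "i \<in> {1..M}" "d' i \<noteq> d i" by blast
        have "sum a {1..M} < sum (\<lambda>_. 0) {1..M}"
          by (rule sum_strict_mono_ex1) (use a_le a_lt[OF i] i in auto)
        then show ?thesis using B by simp
      next
        case True
        then obtain j where j: "j \<in> {1..N}" "s' j \<noteq> s j" using ne by blast
        have "sum (\<lambda>_. 0) {1..N} < sum b {1..N}"
          by (rule sum_strict_mono_ex1) (use b_ge b_gt[OF j] j in auto)
        then show ?thesis using A by simp
      qed
    qed
    ultimately show ?thesis by simp
  qed
  have opt: "welfare M N d0 k0 U C d' s' \<le> welfare M N d0 k0 U C d s"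
    if f': "feasible M N d0 k0 d' s'" for d' s'
  proof (cases "(\<forall>i\<in>{1..M}. d' i = d i) \<and> (\<forall>j\<in>{1..N}. s' j = s j)")
    case True
    then show ?thesis by (auto simp: welfare_def intro!: sum.cong)
  next
    case False
    then show ?thesis using key[OF f'] by simp
  qed
  have uq: "(\<forall>i\<in>{1..M}. d' i = d i) \<and> (\<forall>i\<in>{1..N}. s' i = s i)"
    if h: "feasible M N d0 k0 d' s' \<and> welfare M N d0 k0 U C d' s' = welfare M N d0 k0 U C d s" for d' s'
    using key[of d' s'] h by force
  show ?thesis unfolding unique_optimum_def using feas opt uq by blast
qed


lemma sum_upd:
  fixes f :: "nat \<Rightarrow> real"
  assumes "finite A" "i \<in> A"
  shows "sum (f(i := t)) A = sum f A - f i + t"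
proof -
  have "sum (f(i := t)) A = (f(i := t)) i + sum (f(i := t)) (A - {i})" using sum.remove[OF assms] .
  also have "sum (f(i := t)) (A - {i}) = sum f (A - {i})" by (rule sum.cong) auto
  also have "sum f (A - {i}) = sum f A - f i" using sum.remove[OF assms, of f] by simp
  finally show ?thesis by simp
qed

lemma total_upd_d: "i \<in> {1..M} \<Longrightarrow> total_bid M N (thd(i := t)) ths = total_bid M N thd ths - thd i + t"
  unfolding total_bid_def using sum_upd[of "{1..M}" i thd t] by simp

lemma total_upd_s: "j \<in> {1..N} \<Longrightarrow> total_bid M N thd (ths(j := t)) = total_bid M N thd ths - ths j + t"
  unfolding total_bid_def using sum_upd[of "{1..N}" j ths t] by simp

definition gd where "gd i B t = U i (d0 + t * K / (B + t)) - ((B + t) / K * d0 + t)"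
definition gs where "gs j B t = ((B + t) / K * k0 - t) - C j (k0 - t * K / (B + t))"

lemma payoff_d_dev:
  assumes i: "i \<in> {1..M}" and B: "B = total_bid M N thd ths - thd i" and nz: "B + t \<noteq> 0"
  shows "payoff_d M N d0 k0 U (thd(i := t)) ths i = gd i B t"
proof -
  have tot: "total_bid M N (thd(i := t)) ths = B + t" using total_upd_d[OF i] B by simp
  have pr: "price M N d0 k0 (thd(i := t)) ths = (B + t) / K" using tot nz by (simp add: price_def K_def)
  show ?thesis using tot nz by (simp add: payoff_d_def demand_alloc_def pr gd_def)
qed

lemma payoff_s_dev:
  assumes j: "j \<in> {1..N}" and B: "B = total_bid M N thd ths - ths j" and nz: "B + t \<noteq> 0"
  shows "payoff_s M N d0 k0 C thd (ths(j := t)) j = gs j B t"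
proof -
  have tot: "total_bid M N thd (ths(j := t)) = B + t" using total_upd_s[OF j] B by simp
  have pr: "price M N d0 k0 thd (ths(j := t)) = (B + t) / K" using tot nz by (simp add: price_def K_def)
  show ?thesis using tot nz by (simp add: payoff_s_def supply_alloc_def pr gs_def)
qed

lemma cons_best:
  assumes i: "i \<in> {1..M}" and B: "B > 0" and th: "th \<ge> 0" and t: "t \<ge> 0"
    and ok: "cons_ok i ((B + th) / K) (d0 + th * K / (B + th))"
  shows "gd i B t \<le> gd i B th"
proof -
  define x where "x = d0 + th * K / (B + th)"
  define xt where "xt = d0 + t * K / (B + t)"
  have x0: "d0 \<le> x" using B th K_pos by (simp add: x_def)
  have xt0: "d0 \<le> xt" using B t K_pos by (simp add: xt_def)
  have tan: "U i xt \<le> U i x + U' i x * (xt - x)" by (rule U_tan[OF i xt0 x0])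
  have key: "U' i x * (xt - x) \<le> ((B + t) / K * d0 + t) - ((B + th) / K * d0 + th)"
  proof (cases "phi i x = (B + th) / K")
    case True
    then have hu: "U' i x * (1 - (d0 + th * K / (B + th)) / D) = (B + th) / K"
      by (simp add: phi_def x_def[symmetric])
    show ?thesis using alg_cons_int[OF B th t K_pos D_eq d0_pos hu]
      unfolding xt_def by (simp only: x_def[symmetric])
  next
    case False
    then have xd: "x = d0" and le: "phi i d0 \<le> (B + th) / K" using ok by (auto simp: cons_ok_def x_def)
    have "th * K / (B + th) = 0" using xd by (simp add: x_def)
    then have th0: "th = 0" using K_pos B th by simp
    have hu: "U' i d0 * (1 - d0 / D) \<le> B / K" using le th0 by (simp add: phi_def)
    have "U' i d0 * ((d0 + t * K / (B + t)) - d0) \<le> ((B + t) / K * d0 + t) - (B / K * d0 + 0)"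
      by (rule alg_cons_corner[OF B t K_pos D_eq d0_pos hu])
    then show ?thesis using xd th0 by (simp add: xt_def)
  qed
  show ?thesis using tan key unfolding gd_def x_def xt_def by linarith
qed

lemma supp_best:
  assumes j: "j \<in> {1..N}" and B: "B > 0" and th: "th \<ge> 0" and t: "t \<ge> 0"
    and ok: "supp_ok j ((B + th) / K) (k0 - th * K / (B + th))"
  shows "gs j B t \<le> gs j B th"
proof -
  define x where "x = k0 - th * K / (B + th)"
  define xt where "xt = k0 - t * K / (B + t)"
  have tan: "C j x + C' j x * (xt - x) \<le> C j xt" by (rule C_tan[OF j])
  have key: "((B + t) / K * k0 - t) - ((B + th) / K * k0 - th) - C' j x * (xt - x) \<le> 0"
  proof (cases "psi j x = (B + th) / K")
    case True
    then have hv: "C' j x * (1 + (k0 - th * K / (B + th)) / E) = (B + th) / K"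
      by (simp add: psi_def x_def[symmetric])
    show ?thesis using alg_supp_int[OF B th t K_eq E_pos k0_pos hv]
      unfolding xt_def by (simp only: x_def[symmetric])
  next
    case False
    then have xd: "x = k0" and le: "psi j k0 \<le> (B + th) / K" using ok by (auto simp: supp_ok_def x_def)
    have "th * K / (B + th) = 0" using xd by (simp add: x_def)
    then have th0: "th = 0" using K_pos B th by simp
    have hv: "C' j k0 * (1 + k0 / E) \<le> B / K" using le th0 by (simp add: psi_def)
    have "((B + t) / K * k0 - t) - (B / K * k0 - 0) - C' j k0 * ((k0 - t * K / (B + t)) - k0) \<le> 0"
      by (rule alg_supp_corner[OF B t K_eq E_pos k0_pos hv])
    then show ?thesis using xd th0 by (simp add: xt_def)
  qed
  show ?thesis using tan key unfolding gs_def x_def xt_def by linarith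
qed

lemma clearing_nash:
  assumes cl: "clearing p d s"
    and thd: "thd = (\<lambda>i. p * (d i - d0))" and ths: "ths = (\<lambda>j. p * (k0 - s j))"
  shows "is_nash M N d0 k0 U C thd ths" "demand_alloc M N d0 k0 thd ths = d"
    "supply_alloc M N d0 k0 thd ths = s"
proof -
  have co: "\<And>i. i \<in> {1..M} \<Longrightarrow> cons_ok i p (d i)" and so: "\<And>j. j \<in> {1..N} \<Longrightarrow> supp_ok j p (s j)"
    and pp: "p > 0" and bal: "sum d {1..M} = sum s {1..N}"
    using cl by (auto simp: clearing_def)
  have tot: "total_bid M N thd ths = p * K"
  proof -
    have a: "(\<Sum>i\<in>{1..M}. p * (d i - d0)) = p * (sum d {1..M} - real M * d0)"
      by (simp add: sum_distrib_left[symmetric] sum_subtractf)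
    have b: "(\<Sum>j\<in>{1..N}. p * (k0 - s j)) = p * (real N * k0 - sum s {1..N})"
      by (simp add: sum_distrib_left[symmetric] sum_subtractf)
    show ?thesis unfolding total_bid_def thd ths a b using bal by (simp add: K_def algebra_simps)
  qed
  have tnz: "total_bid M N thd ths \<noteq> 0" using tot pp K_pos by simp
  have pr: "price M N d0 k0 thd ths = p" using tot tnz K_pos by (simp add: price_def K_def)
  show dA: "demand_alloc M N d0 k0 thd ths = d"
    using tnz pr pp by (auto simp: demand_alloc_def thd fun_eq_iff)
  show sA: "supply_alloc M N d0 k0 thd ths = s"
    using tnz pr pp by (auto simp: supply_alloc_def ths fun_eq_iff)
  have cons: "payoff_d M N d0 k0 U (thd(i := t)) ths i \<le> payoff_d M N d0 k0 U thd ths i"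
    if i: "i \<in> {1..M}" and t: "t \<ge> 0" for i t
  proof -
    define B where "B = total_bid M N thd ths - thd i"
    have oki: "cons_ok i p (d i)" by (rule co[OF i])
    have dD: "d i < D"
    proof (rule ccontr)
      assume "\<not> d i < D"
      then have "d i = D" using oki by (auto simp: cons_ok_def)
      then show False using oki phi_D pp D_gt by (auto simp: cons_ok_def)
    qed
    have Bv: "B = p * (D - d i)" using tot by (simp add: B_def thd D_eq algebra_simps)
    have Bp: "B > 0" using Bv pp dD by simp
    have th: "thd i \<ge> 0" using oki pp by (auto simp: cons_ok_def thd)
    have S: "B + thd i = p * K" using B_def tot by simp
    have pe: "(B + thd i) / K = p" using S K_pos by simp
    have xe: "d0 + thd i * K / (B + thd i) = d i" using S pp K_pos by (simp add: thd)
    have ok': "cons_ok i ((B + thd i) / K) (d0 + thd i * K / (B + thd i))" using oki pe xe by simp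
    have "payoff_d M N d0 k0 U (thd(i := t)) ths i = gd i B t"
      by (rule payoff_d_dev[OF i B_def]) (use Bp t in simp)
    moreover have "payoff_d M N d0 k0 U (thd(i := thd i)) ths i = gd i B (thd i)"
      by (rule payoff_d_dev[OF i B_def]) (use Bp th in simp)
    moreover have "gd i B t \<le> gd i B (thd i)" by (rule cons_best[OF i Bp th t ok'])
    ultimately show ?thesis by simp
  qed
  have supp: "payoff_s M N d0 k0 C thd (ths(j := t)) j \<le> payoff_s M N d0 k0 C thd ths j"
    if j: "j \<in> {1..N}" and t: "t \<ge> 0" for j t
  proof -
    define B where "B = total_bid M N thd ths - ths j"
    have okj: "supp_ok j p (s j)" by (rule so[OF j])
    have Bv: "B = p * (E + s j)" using tot by (simp add: B_def ths K_eq algebra_simps)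
    have Bp: "B > 0" using Bv pp okj E_pos by (auto simp: supp_ok_def)
    have th: "ths j \<ge> 0" using okj pp by (auto simp: supp_ok_def ths)
    have S: "B + ths j = p * K" using B_def tot by simp
    have pe: "(B + ths j) / K = p" using S K_pos by simp
    have xe: "k0 - ths j * K / (B + ths j) = s j" using S pp K_pos by (simp add: ths)
    have ok': "supp_ok j ((B + ths j) / K) (k0 - ths j * K / (B + ths j))" using okj pe xe by simp
    have "payoff_s M N d0 k0 C thd (ths(j := t)) j = gs j B t"
      by (rule payoff_s_dev[OF j B_def]) (use Bp t in simp)
    moreover have "payoff_s M N d0 k0 C thd (ths(j := ths j)) j = gs j B (ths j)"
      by (rule payoff_s_dev[OF j B_def]) (use Bp th in simp)
    moreover have "gs j B t \<le> gs j B (ths j)" by (rule supp_best[OF j Bp th t ok'])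
    ultimately show ?thesis by simp
  qed
  have nd: "\<forall>i\<in>{1..M}. thd i \<ge> 0" using co pp by (auto simp: cons_ok_def thd)
  have ns: "\<forall>j\<in>{1..N}. ths j \<ge> 0" using so pp by (auto simp: supp_ok_def ths)
  show "is_nash M N d0 k0 U C thd ths"
    unfolding is_nash_def using nd ns cons supp by blast
qed


lemma nash_nonneg:
  assumes n: "is_nash M N d0 k0 U C thd ths"
  shows "\<forall>i\<in>{1..M}. thd i \<ge> 0" "\<forall>j\<in>{1..N}. ths j \<ge> 0"
  using n by (auto simp: is_nash_def)

lemma nash_total_pos:
  assumes n: "is_nash M N d0 k0 U C thd ths"
  shows "total_bid M N thd ths > 0"
proof -
  have nd: "\<And>i. i \<in> {1..M} \<Longrightarrow> thd i \<ge> 0" and ns: "\<And>j. j \<in> {1..N} \<Longrightarrow> ths j \<ge> 0"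
    using nash_nonneg[OF n] by auto
  have s1: "sum thd {1..M} \<ge> 0" using nd by (intro sum_nonneg) auto
  have s2: "sum ths {1..N} \<ge> 0" using ns by (intro sum_nonneg) auto
  show ?thesis
  proof (rule ccontr)
    assume "\<not> total_bid M N thd ths > 0"
    then have t0: "total_bid M N thd ths = 0" using s1 s2 by (simp add: total_bid_def)
    then have "sum ths {1..N} = 0" using s1 s2 by (simp add: total_bid_def)
    then have z: "\<forall>j\<in>{1..N}. ths j = 0" using sum_nonneg_eq_0_iff[of "{1..N}" ths] ns by auto
    have j: "1 \<in> {1..N}" using N_pos by simp
    define c where "c = C 1 k0"
    have c0: "C 1 0 = 0" using C_zero[OF j] by simp
    have cp: "c > 0"
      using strict_mono_onD[OF C_incr[OF j], of 0 k0] k0_pos c0 by (simp add: c_def)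
    define t where "t = c * K / (2 * E)"
    have tp: "t > 0" using cp K_pos E_pos by (simp add: t_def)
    have orig: "payoff_s M N d0 k0 C thd ths 1 = - c"
      using t0 z j by (simp add: payoff_s_def price_def supply_alloc_def c_def)
    have B: "0 = total_bid M N thd ths - ths 1" using t0 z j by simp
    have dev: "payoff_s M N d0 k0 C thd (ths(1 := t)) 1 = gs 1 0 t"
      by (rule payoff_s_dev[OF j B]) (use tp in simp)
    have "k0 - t * K / (0 + t) = - E" using tp K_eq by simp
    then have "gs 1 0 t = (t / K * k0 - t)" using C_zero[OF j, of "- E"] E_pos by (simp add: gs_def)
    also have "\<dots> = t * (k0 - K) / K" using K_pos by (simp add: field_simps)
    also have "\<dots> = - (t * E / K)" by (simp add: K_eq)
    also have "\<dots> = - c / 2" using K_pos E_pos by (simp add: t_def field_simps)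
    finally have "payoff_s M N d0 k0 C thd (ths(1 := t)) 1 = - c / 2" using dev by simp
    moreover have "payoff_s M N d0 k0 C thd (ths(1 := t)) 1 \<le> payoff_s M N d0 k0 C thd ths 1"
      using n j tp by (auto simp: is_nash_def)
    ultimately show False using orig cp by simp
  qed
qed

lemma nash_cons:
  assumes n: "is_nash M N d0 k0 U C thd ths" and i: "i \<in> {1..M}"
  defines "p \<equiv> total_bid M N thd ths / K"
  shows "cons_ok i p (d0 + thd i / p)"
proof -
  define T where "T = total_bid M N thd ths"
  define th where "th = thd i"
  define B where "B = T - th"
  have Tp: "T > 0" using nash_total_pos[OF n] by (simp add: T_def)
  have nd: "\<And>i. i \<in> {1..M} \<Longrightarrow> thd i \<ge> 0" and ns: "\<And>j. j \<in> {1..N} \<Longrightarrow> ths j \<ge> 0"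
    using nash_nonneg[OF n] by auto
  have th0: "th \<ge> 0" using nd[OF i] by (simp add: th_def)
  have B0: "B \<ge> 0"
  proof -
    have "thd i \<le> sum thd {1..M}" using nd i by (intro member_le_sum) auto
    moreover have "sum ths {1..N} \<ge> 0" using ns by (intro sum_nonneg) auto
    ultimately show ?thesis by (simp add: B_def T_def th_def total_bid_def)
  qed
  have mx: "gd i B t \<le> gd i B th" if t: "t \<ge> 0" and nz: "B + t \<noteq> 0" for t
  proof -
    have "payoff_d M N d0 k0 U (thd(i := t)) ths i \<le> payoff_d M N d0 k0 U thd ths i"
      using n i t by (auto simp: is_nash_def)
    moreover have "payoff_d M N d0 k0 U (thd(i := t)) ths i = gd i B t"
      by (rule payoff_d_dev[OF i]) (use nz in \<open>simp_all add: B_def T_def th_def\<close>)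
    moreover have "payoff_d M N d0 k0 U (thd(i := th)) ths i = gd i B th"
      by (rule payoff_d_dev[OF i]) (use Tp in \<open>simp_all add: B_def T_def th_def\<close>)
    ultimately show ?thesis by (simp add: th_def)
  qed
  have Bp: "B > 0"
  proof (rule ccontr)
    assume "\<not> B > 0"
    then have B0': "B = 0" using B0 by simp
    then have thp: "th > 0" using Tp by (simp add: B_def)
    have "gd i B (th / 2) \<le> gd i B th" using mx[of "th / 2"] thp B0' by simp
    moreover have "gd i B (th / 2) = U i (d0 + K) - (th / 2 / K * d0 + th / 2)"
      using B0' thp by (simp add: gd_def)
    moreover have "gd i B th = U i (d0 + K) - (th / K * d0 + th)"
      using B0' thp by (simp add: gd_def)
    moreover have "th / 2 / K * d0 + th / 2 < th / K * d0 + th"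
    proof -
      have e: "th / 2 / K * d0 + th / 2 = (th / K * d0 + th) / 2" using K_pos by (simp add: field_simps)
      have "th / K * d0 \<ge> 0" using thp K_pos d0_pos by simp
      then have "th / K * d0 + th > 0" using thp by linarith
      moreover have h: "\<And>a::real. 0 < a \<Longrightarrow> a / 2 < a" by simp
      ultimately show ?thesis unfolding e by blast
    qed
    ultimately show False by linarith
  qed
  define x where "x = d0 + th * K / (B + th)"
  have Sp: "B + th > 0" using Bp th0 by simp
  have pe: "p = (B + th) / K" by (simp add: p_def B_def T_def)
  have xe: "d0 + thd i / p = x" using Sp K_pos by (simp add: pe x_def th_def)
  have hd: "((\<lambda>t. d0 + t * K / (B + t)) has_real_derivative K * B / (B + th)^2) (at th within {0..})"
    by (rule h_deriv[OF Bp th0])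
  have sub: "(\<lambda>t. d0 + t * K / (B + t)) ` {0..} \<subseteq> {d0..}"
    using Bp K_pos by auto
  have dU: "((\<lambda>t. U i (d0 + t * K / (B + t))) has_real_derivative U' i x * (K * B / (B + th)^2)) (at th within {0..})"
    unfolding x_def by (rule DERIV_chain_within[OF hd sub]) (use th0 U_der[OF i] in auto)
  have dg: "(gd i B has_real_derivative (U' i x * (K * B / (B + th)^2) - (1 / K * d0 + 1))) (at th within {0..})"
    unfolding gd_def[abs_def] by (rule DERIV_diff[OF dU lin_deriv]) (use K_pos in simp)
  have mx': "\<And>t. t \<ge> 0 \<Longrightarrow> gd i B t \<le> gd i B th" using mx Bp by (simp add: add_pos_nonneg)
  have f1: "U' i x * (K * B / (B + th)^2) - (1 / K * d0 + 1) \<le> 0" by (rule foc_gen(1)[OF dg th0 mx'])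
  have f2: "th > 0 \<Longrightarrow> U' i x * (K * B / (B + th)^2) - (1 / K * d0 + 1) = 0" by (rule foc_gen(2)[OF dg th0 mx'])
  have sg: "phi i x - p = ((B + th) / D) * (U' i x * (K * B / (B + th)^2) - (1 / K * d0 + 1))"
    using sgn_cons[OF Bp th0 K_pos D_eq d0_pos, of "U' i x"] by (simp add: phi_def pe x_def)
  have Dp: "(B + th) / D > 0" using Sp D_pos by simp
  have x0: "d0 \<le> x" using Sp th0 K_pos by (simp add: x_def)
  have xD: "x \<le> D"
  proof -
    have "th / (B + th) \<le> 1" using Sp Bp by simp
    then have "(th / (B + th)) * K \<le> 1 * K" using K_pos by (intro mult_right_mono) auto
    then have "th * K / (B + th) \<le> K" by simp
    then show ?thesis by (simp add: x_def D_eq)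
  qed
  have "((B + th) / D) * (U' i x * (K * B / (B + th)^2) - (1 / K * d0 + 1)) \<le> 0"
    using less_imp_le[OF Dp] f1 by (rule mult_nonneg_nonpos)
  then have "phi i x \<le> p" using sg by linarith
  moreover have "th > 0 \<Longrightarrow> phi i x = p" using sg f2 by simp
  moreover have "th = 0 \<Longrightarrow> x = d0" by (simp add: x_def)
  ultimately have "cons_ok i p x" using x0 xD th0 unfolding cons_ok_def by force
  then show ?thesis using xe by simp
qed

lemma nash_supp:
  assumes n: "is_nash M N d0 k0 U C thd ths" and j: "j \<in> {1..N}"
  defines "p \<equiv> total_bid M N thd ths / K"
  shows "supp_ok j p (k0 - ths j / p)"
proof -
  define T where "T = total_bid M N thd ths"
  define th where "th = ths j"
  define B where "B = T - th"
  have Tp: "T > 0" using nash_total_pos[OF n] by (simp add: T_def)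
  have nd: "\<And>i. i \<in> {1..M} \<Longrightarrow> thd i \<ge> 0" and ns: "\<And>j. j \<in> {1..N} \<Longrightarrow> ths j \<ge> 0"
    using nash_nonneg[OF n] by auto
  have th0: "th \<ge> 0" using ns[OF j] by (simp add: th_def)
  have B0: "B \<ge> 0"
  proof -
    have "ths j \<le> sum ths {1..N}" using ns j by (intro member_le_sum) auto
    moreover have "sum thd {1..M} \<ge> 0" using nd by (intro sum_nonneg) auto
    ultimately show ?thesis by (simp add: B_def T_def th_def total_bid_def)
  qed
  have mx: "gs j B t \<le> gs j B th" if t: "t \<ge> 0" and nz: "B + t \<noteq> 0" for t
  proof -
    have "payoff_s M N d0 k0 C thd (ths(j := t)) j \<le> payoff_s M N d0 k0 C thd ths j"
      using n j t by (auto simp: is_nash_def)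
    moreover have "payoff_s M N d0 k0 C thd (ths(j := t)) j = gs j B t"
      by (rule payoff_s_dev[OF j]) (use nz in \<open>simp_all add: B_def T_def th_def\<close>)
    moreover have "payoff_s M N d0 k0 C thd (ths(j := th)) j = gs j B th"
      by (rule payoff_s_dev[OF j]) (use Tp in \<open>simp_all add: B_def T_def th_def\<close>)
    ultimately show ?thesis by (simp add: th_def)
  qed
  have Bp: "B > 0"
  proof (rule ccontr)
    assume "\<not> B > 0"
    then have B0': "B = 0" using B0 by simp
    then have thp: "th > 0" using Tp by (simp add: B_def)
    have cz: "C j (k0 - K) = 0" using C_zero[OF j] K_eq E_pos by simp
    have "gs j B (th / 2) \<le> gs j B th" using mx[of "th / 2"] thp B0' by simp
    moreover have "gs j B (th / 2) = (th / 2 / K * k0 - th / 2) - C j (k0 - K)"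
      using B0' thp by (simp add: gs_def)
    moreover have "gs j B th = (th / K * k0 - th) - C j (k0 - K)"
      using B0' thp by (simp add: gs_def)
    moreover have "th / K * k0 - th < th / 2 / K * k0 - th / 2"
    proof -
      define q where "q = th * E / K"
      have "th / K * k0 - th = th * (k0 - K) / K" using K_pos by (simp add: field_simps)
      also have "\<dots> = - q" by (simp add: K_eq q_def)
      finally have 1: "th / K * k0 - th = - q" .
      have 2: "th / 2 / K * k0 - th / 2 = (th / K * k0 - th) / 2" by (simp add: field_simps)
      have "q > 0" using thp E_pos K_pos by (simp add: q_def)
      then show ?thesis using 1 2 by linarith
    qed
    ultimately show False by linarith
  qed
  define x where "x = k0 - th * K / (B + th)"
  have Sp: "B + th > 0" using Bp th0 by simp
  have pp: "p > 0" using Tp K_pos by (simp add: p_def T_def)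
  have pe: "p = (B + th) / K" by (simp add: p_def B_def T_def)
  have xe: "k0 - ths j / p = x" using Sp K_pos by (simp add: pe x_def th_def)
  have hd: "((\<lambda>t. k0 - t * K / (B + t)) has_real_derivative - (K * B / (B + th)^2)) (at th within {0..})"
    by (rule h_deriv2[OF Bp th0])
  have dC: "((\<lambda>t. C j (k0 - t * K / (B + t))) has_real_derivative C' j x * (- (K * B / (B + th)^2))) (at th within {0..})"
    unfolding x_def by (rule DERIV_chain'[OF hd C_der[OF j]])
  have dg: "(gs j B has_real_derivative ((1 / K * k0 - 1) - C' j x * (- (K * B / (B + th)^2)))) (at th within {0..})"
    unfolding gs_def[abs_def] by (rule DERIV_diff[OF lin_deriv2 dC]) (use K_pos in simp)
  have mx': "\<And>t. t \<ge> 0 \<Longrightarrow> gs j B t \<le> gs j B th" using mx Bp by (simp add: add_pos_nonneg)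
  have f1: "(1 / K * k0 - 1) - C' j x * (- (K * B / (B + th)^2)) \<le> 0" by (rule foc_gen(1)[OF dg th0 mx'])
  have f2: "th > 0 \<Longrightarrow> (1 / K * k0 - 1) - C' j x * (- (K * B / (B + th)^2)) = 0" by (rule foc_gen(2)[OF dg th0 mx'])
  have sg: "psi j x - p = ((B + th) / E) * ((1 / K * k0 - 1) - C' j x * (- (K * B / (B + th)^2)))"
    using sgn_supp[OF Bp th0 K_eq E_pos k0_pos, of "C' j x"] by (simp add: psi_def pe x_def)
  have Ep: "(B + th) / E > 0" using Sp E_pos by simp
  have xk: "x \<le> k0" using Sp th0 K_pos by (simp add: x_def)
  have "((B + th) / E) * ((1 / K * k0 - 1) - C' j x * (- (K * B / (B + th)^2))) \<le> 0"
    using less_imp_le[OF Ep] f1 by (rule mult_nonneg_nonpos)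
  then have le: "psi j x \<le> p" using sg by linarith
  have eq: "th > 0 \<Longrightarrow> psi j x = p" using sg f2 by simp
  have x0: "0 \<le> x"
  proof (cases "th > 0")
    case True
    show ?thesis
    proof (rule ccontr)
      assume "\<not> 0 \<le> x"
      then have "psi j x = 0" using psi_nonpos[OF j] by simp
      then show False using eq[OF True] pp by simp
    qed
  next
    case False
    then show ?thesis using th0 k0_pos by (simp add: x_def)
  qed
  have "th = 0 \<Longrightarrow> x = k0" by (simp add: x_def)
  then have "supp_ok j p x" using x0 xk th0 le eq unfolding supp_ok_def by force
  then show ?thesis using xe by simp
qed

lemma nash_clearing:
  assumes n: "is_nash M N d0 k0 U C thd ths"
  defines "p \<equiv> total_bid M N thd ths / K"
  shows "clearing p (\<lambda>i. d0 + thd i / p) (\<lambda>j. k0 - ths j / p)"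
proof -
  have Tp: "total_bid M N thd ths > 0" by (rule nash_total_pos[OF n])
  have pp: "p > 0" using Tp K_pos by (simp add: p_def)
  have bal: "(\<Sum>i\<in>{1..M}. d0 + thd i / p) = (\<Sum>j\<in>{1..N}. k0 - ths j / p)"
  proof -
    have a: "(\<Sum>i\<in>{1..M}. d0 + thd i / p) = real M * d0 + sum thd {1..M} / p"
      by (simp add: sum.distrib sum_divide_distrib)
    have b: "(\<Sum>j\<in>{1..N}. k0 - ths j / p) = real N * k0 - sum ths {1..N} / p"
      by (simp add: sum_subtractf sum_divide_distrib)
    have T0: "sum thd {1..M} + sum ths {1..N} > 0" using Tp by (simp add: total_bid_def)
    have "(sum thd {1..M} + sum ths {1..N}) / p = K"
      using T0 K_pos by (simp add: p_def total_bid_def)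
    then have "sum thd {1..M} / p + sum ths {1..N} / p = K" by (simp add: add_divide_distrib)
    then show ?thesis unfolding a b by (simp add: K_def algebra_simps)
  qed
  show ?thesis unfolding clearing_def
    using pp bal nash_cons[OF n] nash_supp[OF n] by (simp add: p_def)
qed


lemma main:
  "\<exists>thd ths. is_nash M N d0 k0 U C thd ths \<and>
           (\<forall>thd' ths'. is_nash M N d0 k0 U C thd' ths' \<longrightarrow>
              (\<forall>i\<in>{1..M}. thd' i = thd i) \<and> (\<forall>i\<in>{1..N}. ths' i = ths i)) \<and>
           unique_optimum M N d0 k0 U C
             (demand_alloc M N d0 k0 thd ths) (supply_alloc M N d0 k0 thd ths)"
proof -
  obtain p d s where cl: "clearing p d s" using clearing_exists by blast
  define thd where "thd = (\<lambda>i. p * (d i - d0))"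
  define ths where "ths = (\<lambda>j. p * (k0 - s j))"
  note cn = clearing_nash[OF cl thd_def ths_def]
  have pp: "p > 0" using cl by (simp add: clearing_def)
  have uq: "(\<forall>i\<in>{1..M}. thd' i = thd i) \<and> (\<forall>i\<in>{1..N}. ths' i = ths i)"
    if n: "is_nash M N d0 k0 U C thd' ths'" for thd' ths'
  proof -
    define p' where "p' = total_bid M N thd' ths' / K"
    have cl': "clearing p' (\<lambda>i. d0 + thd' i / p') (\<lambda>j. k0 - ths' j / p')"
      unfolding p'_def by (rule nash_clearing[OF n])
    have pp': "p' > 0" using cl' by (simp add: clearing_def)
    note u = clearing_unique[OF cl cl']
    have "thd' i = thd i" if i: "i \<in> {1..M}" for i
    proof -
      have "d i = d0 + thd' i / p'" using u(2) i by simp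
      then have "thd' i = p' * (d i - d0)" using pp' by (simp add: field_simps)
      then show ?thesis using u(1) by (simp add: thd_def)
    qed
    moreover have "ths' j = ths j" if j: "j \<in> {1..N}" for j
    proof -
      have "s j = k0 - ths' j / p'" using u(3) j by simp
      then have "ths' j = p' * (k0 - s j)" using pp' by (simp add: field_simps)
      then show ?thesis using u(1) by (simp add: ths_def)
    qed
    ultimately show ?thesis by blast
  qed
  have "unique_optimum M N d0 k0 U C (demand_alloc M N d0 k0 thd ths) (supply_alloc M N d0 k0 thd ths)"
    using welfare_opt[OF cl] cn(2,3) by simp
  then show ?thesis using cn(1) uq by blast
qed

end

theorem theorem2:
  fixes M N :: nat and d0 k0 :: real
    and U C :: "nat \<Rightarrow> real \<Rightarrow> real"
  assumes M_pos: "M \<ge> 1"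
    and d0_pos: "d0 > 0" and k0_pos: "k0 > 0"
    and cap: "real M * d0 < real N * k0"
    and U_concave: "\<forall>i\<in>{1..M}. concave_on {d0..} (U i)"
    and U_incr: "\<forall>i\<in>{1..M}. strict_mono_on {d0..} (U i)"
    and U_C1: "\<forall>i\<in>{1..M}. \<exists>U'. (\<forall>x\<in>{d0..}. (U i has_real_derivative U' x) (at x within {d0..}))
                                 \<and> continuous_on {d0..} U'"
    and U_d0: "\<forall>i\<in>{1..M}. U i d0 = 0"
    and C_convex: "\<forall>i\<in>{1..N}. convex_on UNIV (C i)"
    and C_incr: "\<forall>i\<in>{1..N}. strict_mono_on {0..} (C i)"
    and C_C1: "\<forall>i\<in>{1..N}. \<exists>C'. (\<forall>x. (C i has_real_derivative C' x) (at x)) \<and> continuous_on UNIV C'"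
    and C_nonneg: "\<forall>i\<in>{1..N}. \<forall>x\<ge>0. C i x \<ge> 0"
    and C_zero: "\<forall>i\<in>{1..N}. \<forall>x\<le>0. C i x = 0"
    and no_pivot: "(real N - 1) * k0 / (real M * d0) > 1"
  shows "\<exists>thd ths. is_nash M N d0 k0 U C thd ths \<and>
           (\<forall>thd' ths'. is_nash M N d0 k0 U C thd' ths' \<longrightarrow>
              (\<forall>i\<in>{1..M}. thd' i = thd i) \<and> (\<forall>i\<in>{1..N}. ths' i = ths i)) \<and>
           unique_optimum M N d0 k0 U C
             (demand_alloc M N d0 k0 thd ths) (supply_alloc M N d0 k0 thd ths)"
proof -
  obtain Ud where Ud: "\<forall>i\<in>{1..M}. (\<forall>x\<in>{d0..}. (U i has_real_derivative Ud i x) (at x within {d0..}))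
                                 \<and> continuous_on {d0..} (Ud i)"
    using bchoice[OF U_C1] by blast
  obtain Cd where Cd: "\<forall>i\<in>{1..N}. (\<forall>x. (C i has_real_derivative Cd i x) (at x)) \<and> continuous_on UNIV (Cd i)"
    using bchoice[OF C_C1] by blast
  have Md: "real M * d0 > 0" using M_pos d0_pos by simp
  have piv: "real M * d0 < (real N - 1) * k0" using no_pivot Md by (simp add: less_divide_eq)
  interpret mkt M N d0 k0 U C Ud Cd
    by unfold_locales (use M_pos d0_pos k0_pos U_concave U_incr Ud C_convex C_incr Cd C_nonneg C_zero piv in auto)
  show ?thesis by (rule main)
qed

end
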